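(* Let $w$ be any weight function, $n\ge1$ and $-1<x<1$. Then $$\underline{p}_x(t)\le\chi_{[-1,x)}(t)\le\chi_{[-1,x]}(t)\le p_x(t)\qquad\text{for all }-1\le t\le1.$$ In addition: if $-1\in S_x$ then $\underline{p}_x'(-1)\le0\le p_x'(-1)$; if $-1\notin S_x$ then $p_x'(-1)\le0\le\underline{p}_x'(-1)$; if $1\in S_x$ then $p_x'(1)\le0\le\underline{p}_x'(1)$; if $1\notin S_x$ then $\underline{p}_x'(1)\le 0\le p_x'(1)$.
   Context: A weight function is a non-negative integrable function $w$ on $[-1,1]$ with nonzero integral. $\chi_A$ denotes the indicator function of $A$. Fix $n\ge1$. Let $\varphi$ be the orthonormal polynomial of degree $n$ with positive leading coefficient w.r.t. $w(t)\,dt$ on $[-1,1]$ and $\psi$ the orthonormal polynomial of degree $n-1$ with positive leading coefficient w.r.t. $(1-t^2)w(t)\,dt$. For real $a$ let $P_a(t)=\varphi(t)-a(1-t)\psi(t)$ if $a\ge0$, $P_a(t)=\varphi(t)-a(1+t)\psi(t)$ if $a\le0$; its zeros are $-1<\xi_1(a)<\dots<\xi_n(a)<1$. The zeros of $(1-t^2)\psi(t)$ are $-1=\eta_0<\eta_1<\dots<\eta_n=1$. The following node sets each carry a unique quadrature formula with positive weights exact for all polynomials of degree $\le 2n-1$ with respect to $w$: $\{\xi_i(0)\}_{i=1}^n$; $\{\eta_0,\dots,\eta_n\}$; $\{-1\}\cup\{\xi_i(a)\}_i$ for $0<a<\infty$; $\{\xi_i(a)\}_i\cup\{1\}$ for $-\infty<a<0$.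 Each $x\in(-1,1)$ is a node of exactly one of them; call its node set $S_x$. Let $I(u)=2$ for $-1<u<1$ and $I(\pm1)=1$. For $-1<x<1$, $p_x$ is the unique polynomial of degree at most $\sum_{u\in S_x}I(u)-2$ with $p_x(u)=1$ for $u\in S_x\cap[-1,x]$, $p_x(u)=0$ for $u\in S_x\cap(x,1]$, and $p_x'(u)=0$ for $u\in(S_x\setminus\{x\})\cap(-1,1)$; $\underline{p}_x$ is the unique polynomial of degree at most $\sum_{u\in S_x}I(u)-2$ with $\underline{p}_x(u)=1$ for $u\in S_x\cap[-1,x)$, $\underline{p}_x(u)=0$ for $u\in S_x\cap[x,1]$, and $\underline{p}_x'(u)=0$ for $u\in(S_x\setminus\{x\})\cap(-1,1)$. *)

theory Defs
  imports "HOL-Analysis.Analysis" "HOL-Computational_Algebra.Polynomial"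
begin

definition wip :: "(real \<Rightarrow> real) \<Rightarrow> real poly \<Rightarrow> real poly \<Rightarrow> real" where
  "wip w p q = integral {-1..1} (\<lambda>t. w t * poly p t * poly q t)"

definition is_orthonormal_poly :: "(real \<Rightarrow> real) \<Rightarrow> nat \<Rightarrow> real poly \<Rightarrow> bool" where
  "is_orthonormal_poly w n p \<longleftrightarrow>
     degree p = n \<and> lead_coeff p > 0 \<and>
     (\<forall>q. degree q < n \<longrightarrow> wip w p q = 0) \<and> wip w p p = 1"

definition phi :: "(real \<Rightarrow> real) \<Rightarrow> nat \<Rightarrow> real poly" where
  "phi w n = (THE p. is_orthonormal_poly w n p)"

definition psi :: "(real \<Rightarrow> real) \<Rightarrow> nat \<Rightarrow> real poly" where
  "psi w n = (THE p. is_orthonormal_poly (\<lambda>t. (1 - t\<^sup>2) * w t) (n - 1) p)"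

definition Pa :: "(real \<Rightarrow> real) \<Rightarrow> nat \<Rightarrow> real \<Rightarrow> real poly" where
  "Pa w n a = (if a \<ge> 0 then phi w n - smult a ([:1, -1:] * psi w n)
               else phi w n - smult a ([:1, 1:] * psi w n))"

definition xi_set :: "(real \<Rightarrow> real) \<Rightarrow> nat \<Rightarrow> real \<Rightarrow> real set" where
  "xi_set w n a = {t. poly (Pa w n a) t = 0}"

definition node_set :: "(real \<Rightarrow> real) \<Rightarrow> nat \<Rightarrow> real \<Rightarrow> real set" where
  "node_set w n a = (if a = 0 then xi_set w n 0
                     else if a > 0 then insert (-1) (xi_set w n a)
                     else insert 1 (xi_set w n a))"

definition eta_set :: "(real \<Rightarrow> real) \<Rightarrow> nat \<Rightarrow> real set" where
  "eta_set w n = {t. poly ([:1, 0, -1:] * psi w n) t = 0}"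

definition node_sets :: "(real \<Rightarrow> real) \<Rightarrow> nat \<Rightarrow> real set set" where
  "node_sets w n = insert (eta_set w n) (range (node_set w n))"

definition Sx :: "(real \<Rightarrow> real) \<Rightarrow> nat \<Rightarrow> real \<Rightarrow> real set" where
  "Sx w n x = (THE S. S \<in> node_sets w n \<and> x \<in> S)"

definition Imult :: "real \<Rightarrow> int" where
  "Imult u = (if u = -1 \<or> u = 1 then 1 else 2)"

definition p_up :: "(real \<Rightarrow> real) \<Rightarrow> nat \<Rightarrow> real \<Rightarrow> real poly" where
  "p_up w n x = (THE p. int (degree p) \<le> (\<Sum>u\<in>Sx w n x. Imult u) - 2 \<and>
      (\<forall>u \<in> Sx w n x \<inter> {-1..x}. poly p u = 1) \<and>
      (\<forall>u \<in> Sx w n x \<inter> {x<..1}. poly p u = 0) \<and>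
      (\<forall>u \<in> (Sx w n x - {x}) \<inter> {-1<..<1}. poly (pderiv p) u = 0))"

definition p_low :: "(real \<Rightarrow> real) \<Rightarrow> nat \<Rightarrow> real \<Rightarrow> real poly" where
  "p_low w n x = (THE p. int (degree p) \<le> (\<Sum>u\<in>Sx w n x. Imult u) - 2 \<and>
      (\<forall>u \<in> Sx w n x \<inter> {-1..<x}. poly p u = 1) \<and>
      (\<forall>u \<in> Sx w n x \<inter> {x..1}. poly p u = 0) \<and>
      (\<forall>u \<in> (Sx w n x - {x}) \<inter> {-1<..<1}. poly (pderiv p) u = 0))"

end

theory Submission
  imports Defs
begin


definition good_weight :: "(real \<Rightarrow> real) \<Rightarrow> bool" where
  "good_weight v \<longleftrightarrow> (\<forall>t\<in>{-1..1}. v t \<ge> 0) \<and> v integrable_on {-1..1} \<and> integral {-1..1} v \<noteq> 0"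

lemma gw_integrable_cont:
  assumes "good_weight v" "continuous_on {-1..1} f"
  shows "(\<lambda>t. v t * f t) integrable_on {-1..1}"
proof -
  have vi: "v absolutely_integrable_on {-1..1}"
    using assms(1) unfolding good_weight_def by (auto intro: nonnegative_absolutely_integrable_1)
  have "(\<lambda>t. f t * v t) absolutely_integrable_on {-1..1}"
  proof (rule absolutely_integrable_bounded_measurable_product_real)
    show "f \<in> borel_measurable (lebesgue_on {-1..1})"
      using assms(2) by (intro continuous_imp_measurable_on_sets_lebesgue) auto
    show "bounded (f ` {-1..1})"
      using assms(2) by (intro compact_imp_bounded compact_continuous_image) auto
  qed (use vi in auto)
  then show ?thesis
    by (auto dest: set_lebesgue_integral_eq_integral simp: mult.commute)
qed

lemma gw_integrable_poly:
  assumes "good_weight v"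
  shows "(\<lambda>t. v t * poly p t) integrable_on {-1..1}"
  by (rule gw_integrable_cont[OF assms]) (auto intro: continuous_intros)

lemma gw_pos_int:
  assumes gw: "good_weight v" and h: "h \<noteq> 0" and hn: "\<And>t. t \<in> {-1<..<1} \<Longrightarrow> poly h t \<ge> 0"
  shows "integral {-1..1} (\<lambda>t. v t * poly h t) > 0"
proof -
  have vn: "\<And>t. t\<in>{-1..1} \<Longrightarrow> v t \<ge> 0" and vi: "v integrable_on {-1..1}"
    and v0: "integral {-1..1} v \<noteq> 0" using gw unfolding good_weight_def by auto
  have hn': "poly h t \<ge> 0" if "t \<in> {-1..1}" for t
  proof -
    have "closure {-1<..<(1::real)} = {-1..1}" by simp
    moreover have "continuous_on {-1..1} (poly h)" by (intro continuous_intros)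
    ultimately show ?thesis
      using continuous_ge_on_closure[of "{-1<..<(1::real)}" "poly h" t 0] hn that
      by auto
  qed
  have nn: "\<And>t. t\<in>{-1..1} \<Longrightarrow> v t * poly h t \<ge> 0" using vn hn' by auto
  have int: "(\<lambda>t. v t * poly h t) integrable_on {-1..1}" by (rule gw_integrable_poly[OF gw])
  have ge: "integral {-1..1} (\<lambda>t. v t * poly h t) \<ge> 0"
    by (rule integral_nonneg[OF int nn])
  show ?thesis
  proof (rule ccontr)
    assume "\<not> ?thesis"
    then have z: "integral {-1..1} (\<lambda>t. v t * poly h t) = 0" using ge by auto
    have ai: "(\<lambda>t. v t * poly h t) absolutely_integrable_on {-1..1}"
      using int nn by (intro nonnegative_absolutely_integrable_1) auto
    then have "set_lebesgue_integral lebesgue {-1..1} (\<lambda>t. v t * poly h t) = 0"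
      using z set_lebesgue_integral_eq_integral(2)[of "{-1..1}" "\<lambda>t. v t * poly h t"] by simp
    then have "AE t in lebesgue. indicator {-1..1} t *\<^sub>R (v t * poly h t) = 0"
      unfolding set_lebesgue_integral_def
      by (subst (asm) integral_nonneg_eq_0_iff_AE)
         (use ai nn in \<open>auto simp: set_integrable_def indicator_def\<close>)
    moreover have "AE t in lebesgue. t \<notin> {t. poly h t = 0}"
    proof -
      have "finite {t. poly h t = 0}" using h by (simp add: poly_roots_finite)
      then have "{t. poly h t = 0} \<in> null_sets lebesgue"
        by (simp add: finite_imp_null_set_lborel null_sets_completionI)
      then show ?thesis by (rule AE_not_in)
    qed
    ultimately have ae: "AE t in lebesgue. indicator {-1..1} t *\<^sub>R v t = 0"
      by eventually_elim (auto simp: indicator_def)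
    have vai: "v absolutely_integrable_on {-1..1}" using vi vn by (intro nonnegative_absolutely_integrable_1) auto
    have "integral {-1..1} v = set_lebesgue_integral lebesgue {-1..1} v"
      using set_lebesgue_integral_eq_integral(2)[OF vai] by simp
    also have "\<dots> = 0"
      unfolding set_lebesgue_integral_def by (rule integral_eq_zero_AE[OF ae])
    finally show False using v0 by simp
  qed
qed



lemma wip_sym: "wip v p q = wip v q p"
  by (simp add: wip_def mult_ac)

lemma wip_int: assumes "good_weight v"
  shows "(\<lambda>t. v t * poly p t * poly q t) integrable_on {-1..1}"
  using gw_integrable_poly[OF assms, of "p*q"] by (simp add: mult.assoc)

lemma wip_add_right: assumes "good_weight v"
  shows "wip v p (q + r) = wip v p q + wip v p r"
proof -
  have "wip v p (q + r) = integral {-1..1} (\<lambda>t. v t * poly p t * poly q t + v t * poly p t * poly r t)"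
    unfolding wip_def by (simp add: algebra_simps)
  also have "\<dots> = wip v p q + wip v p r"
    unfolding wip_def by (rule integral_add; rule wip_int[OF assms])
  finally show ?thesis .
qed

lemma wip_diff_right: assumes "good_weight v"
  shows "wip v p (q - r) = wip v p q - wip v p r"
proof -
  have "wip v p (q - r) = integral {-1..1} (\<lambda>t. v t * poly p t * poly q t - v t * poly p t * poly r t)"
    unfolding wip_def by (simp add: algebra_simps)
  also have "\<dots> = wip v p q - wip v p r"
    unfolding wip_def by (rule integral_diff; rule wip_int[OF assms])
  finally show ?thesis .
qed

lemma wip_smult_right: "wip v p (smult c q) = c * wip v p q"
proof -
  have "wip v p (smult c q) = integral {-1..1} (\<lambda>t. c *\<^sub>R (v t * poly p t * poly q t))"
    unfolding wip_def by (simp add: algebra_simps)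
  then show ?thesis unfolding wip_def by simp
qed

lemma wip_zero_right[simp]: "wip v p 0 = 0"
  by (simp add: wip_def)

lemma wip_sum_right: assumes "good_weight v" "finite I"
  shows "wip v p (\<Sum>i\<in>I. f i) = (\<Sum>i\<in>I. wip v p (f i))"
  using assms(2) by (induction I rule: finite_induct) (auto simp: wip_add_right[OF assms(1)])

lemma wip_pos: assumes "good_weight v" "p \<noteq> 0"
  shows "wip v p p > 0"
  using gw_pos_int[OF assms(1), of "p*p"] assms(2) unfolding wip_def by (simp add: mult.assoc)

lemma gw_1mt2: assumes "good_weight v"
  shows "good_weight (\<lambda>t. (1 - t\<^sup>2) * v t)"
proof -
  have vn: "\<forall>t\<in>{-1..1}. v t \<ge> 0" using assms unfolding good_weight_def by auto
  have nn: "\<forall>t\<in>{-1..1}. (1 - t\<^sup>2) * v t \<ge> 0"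
  proof
    fix t :: real assume t: "t \<in> {-1..1}"
    then have "t\<^sup>2 \<le> 1" by (simp add: abs_square_le_1 abs_le_iff)
    then show "(1 - t\<^sup>2) * v t \<ge> 0" using vn t by auto
  qed
  have eq: "\<And>t. (1 - t\<^sup>2) * v t = v t * poly [:1,0,-1:] t" by (simp add: power2_eq_square algebra_simps)
  have int: "(\<lambda>t. (1 - t\<^sup>2) * v t) integrable_on {-1..1}"
    unfolding eq by (rule gw_integrable_poly[OF assms])
  have "integral {-1..1} (\<lambda>t. v t * poly [:1,0,-1:] t) > 0"
  proof (rule gw_pos_int[OF assms])
    fix t :: real assume "t \<in> {-1<..<1}"
    then have "t\<^sup>2 \<le> 1" by (simp add: abs_square_le_1 abs_le_iff)
    then have "t * t \<le> 1" by (simp add: power2_eq_square)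
    then show "poly [:1,0,-1:] t \<ge> 0" by simp
  qed simp
  then show ?thesis using nn int unfolding good_weight_def eq by auto
qed

lemma wip_1mt2: "wip (\<lambda>t. (1 - t\<^sup>2) * v t) p q = wip v p ([:1,0,-1:] * q)"
  unfolding wip_def by (rule arg_cong[where f="integral _"]) (auto simp: power2_eq_square algebra_simps)

lemma ortho_orth: "is_orthonormal_poly v m p \<Longrightarrow> q = 0 \<or> degree q < m \<Longrightarrow> wip v p q = 0"
  unfolding is_orthonormal_poly_def by auto

lemma deg_lt_or_zero:
  fixes r :: "real poly"
  assumes "degree r \<le> m" "coeff r m = 0"
  shows "r = 0 \<or> degree r < m"
  using assms by (metis le_neq_implies_less leading_coeff_0_iff)

lemma ortho_lead: assumes gw: "good_weight v" and o: "is_orthonormal_poly v m p" and d: "degree q = m"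
  shows "wip v p q = lead_coeff q / lead_coeff p"
proof -
  have dp: "degree p = m" and lp: "lead_coeff p > 0" and pp: "wip v p p = 1"
    using o unfolding is_orthonormal_poly_def by auto
  define c where "c = lead_coeff q / lead_coeff p"
  define r where "r = q - smult c p"
  have "degree r \<le> m" unfolding r_def using d dp by (simp add: degree_diff_le)
  moreover have "coeff r m = 0" unfolding r_def c_def using d dp lp by simp
  ultimately have "r = 0 \<or> degree r < m" by (rule deg_lt_or_zero)
  then have "wip v p r = 0" by (rule ortho_orth[OF o])
  moreover have "q = r + smult c p" unfolding r_def by simp
  ultimately have "wip v p q = c * wip v p p"
    by (simp add: wip_add_right[OF gw] wip_smult_right)
  then show ?thesis using pp c_def by simp
qed

lemma ortho_unique: assumes gw: "good_weight v"
  and o1: "is_orthonormal_poly v m p1" and o2: "is_orthonormal_poly v m p2"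
  shows "p1 = p2"
proof -
  have d1: "degree p1 = m" and l1: "lead_coeff p1 > 0" and d2: "degree p2 = m" and l2: "lead_coeff p2 > 0"
    using o1 o2 unfolding is_orthonormal_poly_def by auto
  have "wip v p1 p2 = lead_coeff p2 / lead_coeff p1" by (rule ortho_lead[OF gw o1 d2])
  moreover have "wip v p2 p1 = lead_coeff p1 / lead_coeff p2" by (rule ortho_lead[OF gw o2 d1])
  ultimately have "lead_coeff p2 / lead_coeff p1 = lead_coeff p1 / lead_coeff p2" by (simp add: wip_sym)
  then have "lead_coeff p2 * lead_coeff p2 = lead_coeff p1 * lead_coeff p1"
    using l1 l2 by (subst (asm) frac_eq_eq) auto
  then have "(lead_coeff p1 - lead_coeff p2) * (lead_coeff p1 + lead_coeff p2) = 0"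
    by (simp add: algebra_simps)
  then have leq: "lead_coeff p1 = lead_coeff p2" using l1 l2 by simp
  define r where "r = p1 - p2"
  have "degree r \<le> m" unfolding r_def using d1 d2 by (simp add: degree_diff_le)
  moreover have "coeff r m = 0" unfolding r_def using d1 d2 leq by simp
  ultimately have rd: "r = 0 \<or> degree r < m" by (rule deg_lt_or_zero)
  have "wip v r r = wip v p1 r - wip v p2 r"
    unfolding r_def by (simp add: wip_sym[of v "p1 - p2"] wip_diff_right[OF gw])
  also have "\<dots> = 0" using ortho_orth[OF o1 rd] ortho_orth[OF o2 rd] by simp
  finally have "r = 0" using wip_pos[OF gw, of r] by (cases "r = 0") auto
  then show ?thesis unfolding r_def by simp
qed

definition monic_orth :: "(real \<Rightarrow> real) \<Rightarrow> nat \<Rightarrow> real poly \<Rightarrow> bool" where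
  "monic_orth v k e \<longleftrightarrow> degree e = k \<and> lead_coeff e = 1 \<and> (\<forall>q. degree q < k \<longrightarrow> wip v e q = 0)"

lemma span_orth:
  assumes gw: "good_weight v" and E: "\<And>i. i < k \<Longrightarrow> monic_orth v i (E i)"
    and o: "\<And>i. i < k \<Longrightarrow> wip v e (E i) = 0"
  shows "degree q < k \<Longrightarrow> wip v e q = 0"
proof (induction "degree q" arbitrary: q rule: less_induct)
  case less
  show ?case
  proof (cases "q = 0")
    case True then show ?thesis by simp
  next
    case False
    define d where "d = degree q"
    have Ed: "degree (E d) = d" "lead_coeff (E d) = 1" using E[of d] less(2) d_def unfolding monic_orth_def by auto
    define r where "r = q - smult (lead_coeff q) (E d)"
    have "degree r \<le> d" unfolding r_def using Ed d_def by (simp add: degree_diff_le)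
    moreover have "coeff r d = 0" unfolding r_def using Ed d_def by simp
    ultimately have "r = 0 \<or> degree r < d" by (rule deg_lt_or_zero)
    then have wr: "wip v e r = 0" using less(1)[of r] less(2) d_def by auto
    have "q = r + smult (lead_coeff q) (E d)" unfolding r_def by simp
    then have "wip v e q = wip v e (r + smult (lead_coeff q) (E d))" by (rule arg_cong)
    also have "\<dots> = wip v e r + lead_coeff q * wip v e (E d)"
      by (simp add: wip_add_right[OF gw] wip_smult_right)
    finally show ?thesis using o[of d] less(2) d_def wr by simp
  qed
qed

lemma monic_orth_exists: assumes gw: "good_weight v"
  shows "\<exists>e. monic_orth v k e"
proof (induction k rule: less_induct)
  case (less k)
  define E where "E = (\<lambda>j. SOME e. monic_orth v j e)"
  have E: "monic_orth v j (E j)" if "j < k" for j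
    unfolding E_def by (rule someI_ex[OF less[OF that]])
  have Eorth: "wip v (E j) (E i) = 0" if "j < k" "i < k" "i \<noteq> j" for i j
  proof (cases "i < j")
    case True then show ?thesis using E[OF that(1)] E[OF that(2)] unfolding monic_orth_def by auto
  next
    case False then have "j < i" using that by auto
    then have "wip v (E i) (E j) = 0" using E[OF that(1)] E[OF that(2)] unfolding monic_orth_def by auto
    then show ?thesis by (simp add: wip_sym)
  qed
  have Epos: "wip v (E i) (E i) > 0" if "i < k" for i
  proof -
    have "E i \<noteq> 0" using E[OF that] unfolding monic_orth_def by auto
    then show ?thesis by (rule wip_pos[OF gw])
  qed
  define c where "c = (\<lambda>j. wip v (monom 1 k) (E j) / wip v (E j) (E j))"
  define S where "S = (\<Sum>j<k. smult (c j) (E j))"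
  define e where "e = monom 1 k - S"
  have degS: "degree S < k \<or> S = 0"
  proof (cases "k = 0")
    case True then show ?thesis unfolding S_def by simp
  next
    case False
    have "degree S \<le> k - 1" unfolding S_def
      by (rule degree_sum_le) (use E False in \<open>auto simp: monic_orth_def intro: order.trans[OF degree_smult_le]\<close>)
    then show ?thesis using False by auto
  qed
  have cS: "coeff S k = 0" using degS by (auto intro: coeff_eq_0)
  have ce: "coeff e k = 1" unfolding e_def using cS by simp
  have "degree e \<le> k" unfolding e_def using degS
    by (intro degree_diff_le) (auto simp: degree_monom_le)
  moreover have "degree e \<ge> k" using ce by (intro le_degree) simp
  ultimately have de: "degree e = k" by simp
  have le: "lead_coeff e = 1" using de ce by simp
  have oe: "wip v e (E i) = 0" if "i < k" for i
  proof -
    have "wip v e (E i) = wip v (E i) e" by (rule wip_sym)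
    also have "\<dots> = wip v (E i) (monom 1 k) - (\<Sum>j<k. c j * wip v (E i) (E j))"
      unfolding e_def S_def by (simp add: wip_diff_right[OF gw] wip_sum_right[OF gw] wip_smult_right)
    also have "(\<Sum>j<k. c j * wip v (E i) (E j)) = c i * wip v (E i) (E i)"
      by (rule sum.remove[THEN trans]) (use that Eorth wip_sym in \<open>auto intro!: sum.neutral\<close>)
    also have "wip v (E i) (monom 1 k) - c i * wip v (E i) (E i) = 0"
      unfolding c_def using Epos[OF that] by (simp add: wip_sym)
    finally show ?thesis .
  qed
  have "\<forall>q. degree q < k \<longrightarrow> wip v e q = 0"
    using span_orth[OF gw E oe] by auto
  then show ?case using de le unfolding monic_orth_def by blast
qed

lemma ortho_exists: assumes gw: "good_weight v"
  shows "\<exists>p. is_orthonormal_poly v k p"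
proof -
  obtain e where e: "monic_orth v k e" using monic_orth_exists[OF gw] by blast
  then have e0: "e \<noteq> 0" unfolding monic_orth_def by auto
  define c where "c = 1 / sqrt (wip v e e)"
  have pos: "wip v e e > 0" by (rule wip_pos[OF gw e0])
  then have c: "c > 0" unfolding c_def by simp
  have "is_orthonormal_poly v k (smult c e)"
    unfolding is_orthonormal_poly_def
  proof (intro conjI allI impI)
    show "degree (smult c e) = k" using e c unfolding monic_orth_def by simp
    show "lead_coeff (smult c e) > 0" using e c unfolding monic_orth_def by auto
    fix q :: "real poly" assume "degree q < k"
    then have "wip v e q = 0" using e unfolding monic_orth_def by auto
    then show "wip v (smult c e) q = 0"
      by (simp add: wip_sym[of v "smult c e"] wip_smult_right wip_sym[of v e])
  next
    have "wip v (smult c e) (smult c e) = c * c * wip v e e"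
      by (simp add: wip_sym[of v "smult c e"] wip_smult_right)
    also have "\<dots> = 1" unfolding c_def using pos
      by (simp add: field_simps)
    finally show "wip v (smult c e) (smult c e) = 1" .
  qed
  then show ?thesis by blast
qed

lemma ortho_the: assumes "good_weight v"
  shows "is_orthonormal_poly v k (THE p. is_orthonormal_poly v k p)"
  using ortho_exists[OF assms] ortho_unique[OF assms] by (metis theI)



definition pr :: "real set \<Rightarrow> real poly" where
  "pr Y = (\<Prod>z\<in>Y. [:-z,1:])"

lemma pr_ne0[simp]: "pr Y \<noteq> 0"
proof (cases "finite Y")
  case True then show ?thesis unfolding pr_def by (subst prod_zero_iff) auto
qed (simp add: pr_def)

lemma pr_deg: "finite Y \<Longrightarrow> degree (pr Y) = card Y"
  unfolding pr_def by (subst degree_prod_sum_eq) auto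

lemma pr_lead[simp]: "lead_coeff (pr Y) = 1"
  unfolding pr_def by (simp add: lead_coeff_prod)

lemma poly_pr: "poly (pr Y) t = (\<Prod>z\<in>Y. t - z)"
  unfolding pr_def by (simp add: poly_prod)

lemma pr_zero: "finite Y \<Longrightarrow> poly (pr Y) t = 0 \<longleftrightarrow> t \<in> Y"
  unfolding poly_pr by simp

lemma pr_insert: "finite Y \<Longrightarrow> z \<notin> Y \<Longrightarrow> pr (insert z Y) = [:-z,1:] * pr Y"
  unfolding pr_def by simp

lemma FL: "finite Z \<Longrightarrow> \<forall>z\<in>Z. poly f z = 0 \<Longrightarrow> \<exists>g. f = g * pr Z"
proof (induction Z arbitrary: f rule: finite_induct)
  case empty then show ?case by (auto simp: pr_def)
next
  case (insert z Z)
  have "poly f z = 0" using insert by auto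
  then obtain f1 where f1: "f = [:-z,1:] * f1" by (auto simp: poly_eq_0_iff_dvd elim: dvdE)
  have "\<forall>y\<in>Z. poly f1 y = 0"
  proof
    fix y assume "y \<in> Z"
    then have "y \<noteq> z" "poly f y = 0" using insert by auto
    then show "poly f1 y = 0" using f1 by simp
  qed
  then obtain g where "f1 = g * pr Z" using insert.IH by blast
  then show ?case using f1 insert by (intro exI[of _ g]) (simp add: pr_insert mult_ac del: mult_pCons_left mult_pCons_right)
qed

definition csign :: "real poly \<Rightarrow> real \<Rightarrow> real \<Rightarrow> bool" where
  "csign p a b \<longleftrightarrow> (\<forall>t\<in>{a<..<b}. poly p t \<ge> 0) \<or> (\<forall>t\<in>{a<..<b}. poly p t \<le> 0)"

lemma csign_noroot:
  assumes "\<And>t. t \<in> {a<..<b} \<Longrightarrow> poly p t \<noteq> 0"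
  shows "csign p a b"
proof (rule ccontr)
  assume "\<not> csign p a b"
  then obtain t1 t2 where t: "t1 \<in> {a<..<b}" "t2 \<in> {a<..<b}" "poly p t1 < 0" "poly p t2 > 0"
    unfolding csign_def by (auto simp: not_le)
  then have ne: "t1 \<noteq> t2" by auto
  have "poly p (min t1 t2) * poly p (max t1 t2) < 0"
    using t by (cases "t1 \<le> t2") (auto simp: min_def max_def mult_neg_pos mult_pos_neg)
  then obtain x where "x > min t1 t2" "x < max t1 t2" "poly p x = 0"
    using poly_IVT[of "min t1 t2" "max t1 t2" p] ne by (auto simp: min_def max_def split: if_splits)
  moreover have "x \<in> {a<..<b}" using calculation t by (auto simp: min_def max_def split: if_splits)
  ultimately show False using assms by auto
qed

lemma CS: "p \<noteq> 0 \<Longrightarrow> \<exists>Y. finite Y \<and> Y \<subseteq> {a<..<b} \<and> (\<forall>z\<in>Y. poly p z = 0) \<and> csign (p * pr Y) a b"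
proof (induction "degree p" arbitrary: p rule: less_induct)
  case less
  show ?case
  proof (cases "\<exists>z\<in>{a<..<b}. poly p z = 0")
    case False
    then have "csign p a b" by (intro csign_noroot) auto
    then show ?thesis by (intro exI[of _ "{}"]) (auto simp: pr_def)
  next
    case True
    then obtain z where z: "z \<in> {a<..<b}" "poly p z = 0" by blast
    then obtain p1 where p1: "p = [:-z,1:] * p1" by (auto simp: poly_eq_0_iff_dvd elim: dvdE)
    have p10: "p1 \<noteq> 0" using less(2) p1 by auto
    have "degree p = 1 + degree p1" using p1 p10 by (simp add: degree_mult_eq del: mult_pCons_left)
    then have "degree p1 < degree p" by simp
    then obtain O1 where O1: "finite O1" "O1 \<subseteq> {a<..<b}" "\<forall>y\<in>O1. poly p1 y = 0" "csign (p1 * pr O1) a b"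
      using less(1)[OF _ p10] by blast
    have roots: "\<forall>y\<in>O1. poly p y = 0" using O1(3) p1 by simp
    show ?thesis
    proof (cases "z \<in> O1")
      case True
      have "pr O1 = [:-z,1:] * pr (O1 - {z})"
        using O1(1) True pr_insert[of "O1 - {z}" z] by (simp add: insert_absorb)
      then have "p * pr (O1 - {z}) = p1 * pr O1" using p1 by (simp add: mult_ac del: mult_pCons_left mult_pCons_right)
      then show ?thesis using O1 roots by (intro exI[of _ "O1 - {z}"]) auto
    next
      case False
      have eq: "poly (p * pr (insert z O1)) t = (t - z)^2 * poly (p1 * pr O1) t" for t
      proof -
        have pi: "poly (pr (insert z O1)) t = (t - z) * poly (pr O1) t" using O1(1) False by (simp add: poly_pr)
        have pp: "poly p t = (t - z) * poly p1 t" unfolding p1 by (simp add: algebra_simps)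
        show ?thesis unfolding poly_mult pi pp power2_eq_square by (simp add: mult_ac)
      qed
      have "csign (p * pr (insert z O1)) a b"
        using O1(4) unfolding csign_def eq by (auto intro: mult_nonneg_nonpos)
      then show ?thesis using O1 roots z False by (intro exI[of _ "insert z O1"]) auto
    qed
  qed
qed

lemma ortho_roots:
  assumes gw: "good_weight v" and P: "P \<noteq> 0" and g: "g \<noteq> 0" "\<And>t. t\<in>{-1<..<1} \<Longrightarrow> poly g t \<ge> 0"
    and orth: "\<And>q. degree q < m \<Longrightarrow> wip v P (g * q) = 0"
  shows "\<exists>Y. finite Y \<and> Y \<subseteq> {-1<..<1} \<and> (\<forall>z\<in>Y. poly P z = 0) \<and> card Y \<ge> m"
proof -
  obtain Y where Y: "finite Y" "Y \<subseteq> {-1<..<1}" "\<forall>z\<in>Y. poly P z = 0" "csign (P * pr Y) (-1) 1"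
    using CS[OF P, of "-1" 1] by blast
  have "card Y \<ge> m"
  proof (rule ccontr)
    assume "\<not> ?thesis"
    then have "degree (pr Y) < m" using pr_deg[OF Y(1)] by simp
    then have z: "wip v P (g * pr Y) = 0" by (rule orth)
    have eqw: "wip v P (g * pr Y) = integral {-1..1} (\<lambda>t. v t * poly (g * (P * pr Y)) t)"
      unfolding wip_def by (rule arg_cong[where f="integral _"]) (auto simp: mult_ac)
    have h0: "g * (P * pr Y) \<noteq> 0" using g P by simp
    define h where "h = g * (P * pr Y)"
    from Y(4) show False unfolding csign_def
    proof
      assume a: "\<forall>t\<in>{-1<..<1}. poly (P * pr Y) t \<ge> 0"
      have "integral {-1..1} (\<lambda>t. v t * poly h t) > 0"
      proof (rule gw_pos_int[OF gw])
        show "h \<noteq> 0" using h0 h_def by simp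
        fix t :: real assume "t \<in> {-1<..<1}"
        then show "poly h t \<ge> 0" unfolding h_def poly_mult using a g(2)[of t] by (metis mult_nonneg_nonneg poly_mult)
      qed
      then show False using z eqw h_def by simp
    next
      assume a: "\<forall>t\<in>{-1<..<1}. poly (P * pr Y) t \<le> 0"
      have "integral {-1..1} (\<lambda>t. v t * poly (- h) t) > 0"
      proof (rule gw_pos_int[OF gw])
        show "- h \<noteq> 0" using h0 h_def by simp
        fix t :: real assume "t \<in> {-1<..<1}"
        then have "poly h t \<le> 0" unfolding h_def using a g(2)[of t] by (metis mult_nonneg_nonpos poly_mult)
        then show "poly (- h) t \<ge> 0" by simp
      qed
      moreover have "(\<lambda>t. v t * poly (- h) t) = (\<lambda>t. - (v t * poly h t))" by auto
      ultimately have "integral {-1..1} (\<lambda>t. v t * poly h t) < 0" by (simp only: integral_neg)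
      then show False using z eqw h_def by simp
    qed
  qed
  then show ?thesis using Y by blast
qed

lemma full_roots:
  assumes Y: "finite Y" "\<forall>z\<in>Y. poly P z = 0" and P: "P \<noteq> 0" and d: "degree P \<le> card Y"
  shows "P = smult (lead_coeff P) (pr Y) \<and> degree P = card Y"
proof -
  obtain G where G: "P = G * pr Y" using FL[OF Y] by blast
  have G0: "G \<noteq> 0" using G P by auto
  have "degree P = degree G + card Y" using G G0 pr_deg[OF Y(1)] by (simp add: degree_mult_eq)
  then have dG: "degree G = 0" "degree P = card Y" using d by auto
  then have Gc: "G = [:lead_coeff G:]" using degree_0_id[of G] by simp
  moreover have "lead_coeff P = lead_coeff G" using G by (simp add: lead_coeff_mult)
  ultimately have "P = [:lead_coeff P:] * pr Y" using G by simp
  then have "P = smult (lead_coeff P) (pr Y)" by simp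
  then show ?thesis using dG by simp
qed

lemma prod_signs:
  fixes Y :: "real set"
  assumes "finite Y" "Y \<subseteq> {-1<..<1}"
  shows "(\<Prod>z\<in>Y. 1 - z) > 0" "(\<Prod>z\<in>Y. -1 - z) = (-1)^card Y * (\<Prod>z\<in>Y. 1 + z)" "(\<Prod>z\<in>Y. 1 + z) > 0"
proof -
  show "(\<Prod>z\<in>Y. 1 - z) > 0" using assms by (intro prod_pos) auto
  show "(\<Prod>z\<in>Y. 1 + z) > 0" using assms by (intro prod_pos) auto
  have "(\<Prod>z\<in>Y. -1 - z) = (\<Prod>z\<in>Y. - (1 + z))" by simp
  also have "\<dots> = (-1)^card Y * (\<Prod>z\<in>Y. 1 + z)" by (rule prod_uminus)
  finally show "(\<Prod>z\<in>Y. -1 - z) = (-1)^card Y * (\<Prod>z\<in>Y. 1 + z)" .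
qed

lemma radau_roots:
  fixes P :: "real poly" and Y :: "real set"
  assumes Y: "finite Y" "Y \<subseteq> {-1<..<1}" "\<forall>z\<in>Y. poly P z = 0" "card Y + 1 \<ge> n"
    and d: "degree P \<le> n" and s1: "poly P 1 > 0" and s2: "(-1)^n * poly P (-1) > 0"
    and t: "poly P t = 0"
  shows "-1 < t \<and> t < 1"
proof -
  have P: "P \<noteq> 0" using s1 by auto
  obtain G where G: "P = G * pr Y" using FL[OF Y(1) Y(3)] by blast
  have G0: "G \<noteq> 0" using G P by auto
  have "degree P = degree G + card Y" using G G0 pr_deg[OF Y(1)] by (simp add: degree_mult_eq)
  then have dG: "degree G \<le> 1" using d Y(4) by auto
  have ps: "(\<Prod>z\<in>Y. 1 - z) > 0" "(\<Prod>z\<in>Y. -1 - z) = (-1)^card Y * (\<Prod>z\<in>Y. 1 + z)" "(\<Prod>z\<in>Y. 1 + z) > 0"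
    using prod_signs[OF Y(1,2)] by auto
  show ?thesis
  proof (cases "t \<in> Y")
    case True then show ?thesis using Y(2) by auto
  next
    case False
    then have Gt: "poly G t = 0" using t G pr_zero[OF Y(1)] by auto
    have "poly G 1 * (\<Prod>z\<in>Y. 1 - z) > 0" using s1 G by (simp add: poly_pr)
    then have G1: "poly G 1 > 0" using ps(1) by (metis zero_less_mult_pos2)
    have "card Y = n - 1 \<or> card Y \<ge> n" using Y(4) by auto
    then show ?thesis
    proof
      assume "card Y \<ge> n"
      then have "degree P \<le> card Y" using d by simp
      then have "degree G = 0" using \<open>degree P = degree G + card Y\<close> by simp
      then have "G = [:coeff G 0:]" using degree_0_id[of G] by simp
      then show ?thesis using Gt G0 by (metis poly_pCons poly_0 mult_zero_right add_0_right pCons_eq_0_iff)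
    next
      assume cO: "card Y = n - 1"
      have nn: "n \<ge> 1"
      proof (rule ccontr)
        assume "\<not> n \<ge> 1"
        then have "n = 0" by simp
        then have "degree P = 0" using d by simp
        then have "degree G = 0" using \<open>degree P = degree G + card Y\<close> by simp
        then have "G = [:coeff G 0:]" using degree_0_id[of G] by simp
        then show False using Gt G0 by (metis poly_pCons poly_0 mult_zero_right add_0_right pCons_eq_0_iff)
      qed
      have sg: "(-1::real)^n = - ((-1)^card Y)" using cO nn by (cases n) auto
      then have "(-1)^n * poly P (-1) = - (poly G (-1) * ((-1)^card Y * (-1)^card Y) * (\<Prod>z\<in>Y. 1 + z))"
        using G by (simp add: poly_pr ps(2) sg mult_ac)
      also have "(-1::real)^card Y * (-1)^card Y = 1" by (simp add: power_mult_distrib[symmetric])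
      finally have "poly G (-1) * (\<Prod>z\<in>Y. 1 + z) < 0" using s2 by simp
      then have Gm1: "poly G (-1) < 0" using ps(3) by (simp add: mult_less_0_iff)
      define g0 where "g0 = coeff G 0"
      define g1 where "g1 = coeff G 1"
      have Gc: "G = [:g0, g1:]" unfolding g0_def g1_def
      proof (rule poly_eqI)
        fix i show "coeff G i = coeff [:coeff G 0, coeff G 1:] i"
          using dG by (auto simp: coeff_pCons coeff_eq_0 split: nat.split)
      qed
      have e: "g0 + g1 > 0" "g0 - g1 < 0" "g0 + g1 * t = 0" using G1 Gm1 Gt unfolding Gc by (simp_all add: algebra_simps)
      then have g1: "g1 > 0" by linarith
      have "g1 * (1 - t) = g0 + g1" "g1 * (1 + t) = g1 - g0" using e(3) by (simp_all add: algebra_simps)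
      then have "g1 * (1 - t) > 0" "g1 * (1 + t) > 0" using e by linarith+
      then show ?thesis using g1 by (simp_all add: zero_less_mult_iff)
    qed
  qed
qed



lemma wip_cong: "(\<And>t. poly p t * poly q t = poly p' t * poly q' t) \<Longrightarrow> wip v p q = wip v p' q'"
  unfolding wip_def by (rule arg_cong[where f="integral _"]) (auto simp: mult.assoc)

lemma pr_facts:
  assumes Y: "finite Y" "Y \<subseteq> {-1<..<1}" and c: "c > 0" and P: "P = smult c (pr Y)"
  shows "poly P 1 > 0" "(-1)^card Y * poly P (-1) > 0" "poly P t = 0 \<Longrightarrow> t \<in> Y"
proof -
  have ps: "(\<Prod>z\<in>Y. 1 - z) > 0" "(\<Prod>z\<in>Y. -1 - z) = (-1)^card Y * (\<Prod>z\<in>Y. 1 + z)" "(\<Prod>z\<in>Y. 1 + z) > 0"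
    using prod_signs[OF Y] by auto
  show "poly P 1 > 0" using P c ps(1) by (simp add: poly_pr)
  have "(-1)^card Y * poly P (-1) = c * (((-1::real)^card Y * (-1)^card Y) * (\<Prod>z\<in>Y. 1 + z))"
    using P by (simp add: poly_pr ps(2) mult_ac)
  also have "(-1::real)^card Y * (-1)^card Y = 1" by (simp add: power_mult_distrib[symmetric])
  finally show "(-1)^card Y * poly P (-1) > 0" using c ps(3) by simp
  show "poly P t = 0 \<Longrightarrow> t \<in> Y" using P c pr_zero[OF Y(1)] by simp
qed

locale wsetup =
  fixes w :: "real \<Rightarrow> real" and n :: nat
  assumes gw: "good_weight w" and n1: "n \<ge> 1"
begin

abbreviation "\<phi> \<equiv> phi w n"
abbreviation "\<psi> \<equiv> psi w n"
abbreviation "w2 \<equiv> (\<lambda>t. (1 - t\<^sup>2) * w t)"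

lemma gw2: "good_weight w2" by (rule gw_1mt2[OF gw])

lemma phi_o: "is_orthonormal_poly w n \<phi>"
  unfolding phi_def by (rule ortho_the[OF gw])

lemma psi_o: "is_orthonormal_poly w2 (n - 1) \<psi>"
  unfolding psi_def by (rule ortho_the[OF gw2])

lemma phi_deg: "degree \<phi> = n" and phi_lead: "lead_coeff \<phi> > 0"
  using phi_o unfolding is_orthonormal_poly_def by auto

lemma psi_deg: "degree \<psi> = n - 1" and psi_lead: "lead_coeff \<psi> > 0"
  using psi_o unfolding is_orthonormal_poly_def by auto

lemma phi_ne0: "\<phi> \<noteq> 0" using phi_lead by auto
lemma psi_ne0: "\<psi> \<noteq> 0" using psi_lead by auto

lemma phi_roots: "\<exists>Y. finite Y \<and> Y \<subseteq> {-1<..<1} \<and> \<phi> = smult (lead_coeff \<phi>) (pr Y) \<and> card Y = n"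
proof -
  obtain Y where Y: "finite Y" "Y \<subseteq> {-1<..<1}" "\<forall>z\<in>Y. poly \<phi> z = 0" "card Y \<ge> n"
    using ortho_roots[OF gw phi_ne0, of 1 n] phi_o unfolding is_orthonormal_poly_def by auto
  then show ?thesis using full_roots[OF Y(1,3) phi_ne0] phi_deg by auto
qed

lemma psi_roots: "\<exists>Y. finite Y \<and> Y \<subseteq> {-1<..<1} \<and> \<psi> = smult (lead_coeff \<psi>) (pr Y) \<and> card Y = n - 1"
proof -
  obtain Y where Y: "finite Y" "Y \<subseteq> {-1<..<1}" "\<forall>z\<in>Y. poly \<psi> z = 0" "card Y \<ge> n - 1"
    using ortho_roots[OF gw2 psi_ne0, of 1 "n - 1"] psi_o unfolding is_orthonormal_poly_def by auto
  then show ?thesis using full_roots[OF Y(1,3) psi_ne0] psi_deg by auto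
qed

lemma phi_signs: "poly \<phi> 1 > 0" "(-1)^n * poly \<phi> (-1) > 0" "poly \<phi> t = 0 \<Longrightarrow> -1 < t \<and> t < 1"
proof -
  obtain Y where Y: "finite Y" "Y \<subseteq> {-1<..<1}" "\<phi> = smult (lead_coeff \<phi>) (pr Y)" "card Y = n"
    using phi_roots by blast
  note f = pr_facts[OF Y(1,2) phi_lead Y(3)]
  show "poly \<phi> 1 > 0" "(-1)^n * poly \<phi> (-1) > 0" using f(1,2) Y(4) by auto
  show "poly \<phi> t = 0 \<Longrightarrow> -1 < t \<and> t < 1" using f(3)[of t] Y(2) by auto
qed

lemma psi_signs: "poly \<psi> 1 > 0" "(-1)^(n-1) * poly \<psi> (-1) > 0" "poly \<psi> t = 0 \<Longrightarrow> -1 < t \<and> t < 1"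
proof -
  obtain Y where Y: "finite Y" "Y \<subseteq> {-1<..<1}" "\<psi> = smult (lead_coeff \<psi>) (pr Y)" "card Y = n - 1"
    using psi_roots by blast
  note f = pr_facts[OF Y(1,2) psi_lead Y(3)]
  show "poly \<psi> 1 > 0" "(-1)^(n-1) * poly \<psi> (-1) > 0" using f(1,2) Y(4) by auto
  show "poly \<psi> t = 0 \<Longrightarrow> -1 < t \<and> t < 1" using f(3)[of t] Y(2) by auto
qed

lemma poly_Pa: "poly (Pa w n a) t = (if a \<ge> 0 then poly \<phi> t - a * (1 - t) * poly \<psi> t
                                    else poly \<phi> t - a * (1 + t) * poly \<psi> t)"
  unfolding Pa_def by (simp add: algebra_simps)

lemma Pa_deg: "degree (Pa w n a) \<le> n"
proof -
  have d1: "degree ([:1,-1:] * \<psi>) \<le> n" "degree ([:1,1:] * \<psi>) \<le> n"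
    using degree_mult_le[of "[:1,-1:]" \<psi>] degree_mult_le[of "[:1,1:]" \<psi>] psi_deg n1 by auto
  show ?thesis unfolding Pa_def using phi_deg d1
    by (auto intro!: degree_diff_le order.trans[OF degree_smult_le] simp del: mult_pCons_left)
qed

lemma sgn_flip: "(-1::real)^n = - ((-1)^(n-1))"
  using n1 by (cases n) auto

lemma Pa_signs: "poly (Pa w n a) 1 > 0" "(-1)^n * poly (Pa w n a) (-1) > 0"
proof -
  have a1: "poly \<phi> 1 > 0" "(-1)^n * poly \<phi> (-1) > 0" "poly \<psi> 1 > 0" "(-1)^(n-1) * poly \<psi> (-1) > 0"
    using phi_signs psi_signs by auto
  show "poly (Pa w n a) 1 > 0"
  proof (cases "a \<ge> 0")
    case True then show ?thesis using a1 by (simp add: poly_Pa)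
  next
    case False
    then have "- a * 2 * poly \<psi> 1 > 0" using a1 by (simp add: mult_neg_pos)
    then show ?thesis using False a1 by (simp add: poly_Pa algebra_simps)
  qed
  show "(-1)^n * poly (Pa w n a) (-1) > 0"
  proof (cases "a \<ge> 0")
    case True
    have pa: "poly (Pa w n a) (-1) = poly \<phi> (-1) - 2 * a * poly \<psi> (-1)" using True by (simp add: poly_Pa)
    have sf: "(-1)^n * poly \<psi> (-1) = - ((-1)^(n-1) * poly \<psi> (-1))" by (simp only: sgn_flip mult_minus_left)
    have "(-1)^n * poly (Pa w n a) (-1) = (-1)^n * poly \<phi> (-1) - 2 * a * ((-1)^n * poly \<psi> (-1))"
      unfolding pa by (simp add: algebra_simps)
    then have "(-1)^n * poly (Pa w n a) (-1) = (-1)^n * poly \<phi> (-1) + 2 * a * ((-1)^(n-1) * poly \<psi> (-1))"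
      unfolding sf by simp
    moreover have "2 * a * ((-1)^(n-1) * poly \<psi> (-1)) \<ge> 0" using True a1 by simp
    ultimately show ?thesis using a1 by linarith
  next
    case False then show ?thesis using a1 by (simp add: poly_Pa)
  qed
qed

lemma Pa_ne0: "Pa w n a \<noteq> 0"
proof
  assume "Pa w n a = 0" then show False using Pa_signs(1)[of a] by simp
qed

lemma Pa_orth:
  assumes q: "degree q < n - 1"
  shows "wip w (Pa w n a) ((if a \<ge> 0 then [:1,1:] else [:1,-1:]) * q) = 0"
proof -
  define g where "g = (if a \<ge> 0 then [:1,1:] else ([:1,-1:] :: real poly))"
  define h where "h = (if a \<ge> 0 then [:1,-1:] else ([:1,1:] :: real poly))"
  have Pa: "Pa w n a = \<phi> - smult a (h * \<psi>)" unfolding Pa_def h_def by auto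
  have dg: "degree (g * q) < n \<or> g * q = 0"
  proof (cases "q = 0")
    case False
    have "degree (g * q) \<le> degree g + degree q" by (rule degree_mult_le)
    moreover have "degree g \<le> 1" unfolding g_def by auto
    ultimately show ?thesis using q by auto
  qed simp
  have "wip w \<phi> (g * q) = 0" using ortho_orth[OF phi_o] dg by auto
  moreover have "wip w (g * q) (h * \<psi>) = wip w \<psi> ([:1,0,-1:] * q)"
    by (rule wip_cong) (auto simp: g_def h_def algebra_simps)
  moreover have "wip w \<psi> ([:1,0,-1:] * q) = 0"
    using wip_1mt2[of w \<psi> q] ortho_orth[OF psi_o] q by auto
  ultimately have "wip w (g * q) (Pa w n a) = 0"
    unfolding Pa by (simp add: wip_diff_right[OF gw] wip_smult_right wip_sym[of w "g*q" \<phi>])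
  then show ?thesis unfolding g_def[symmetric] using wip_sym[of w "Pa w n a" "g*q"] by simp
qed

lemma Pa_roots: "poly (Pa w n a) t = 0 \<Longrightarrow> -1 < t \<and> t < 1"
proof -
  define g where "g = (if a \<ge> 0 then [:1,1:] else ([:1,-1:] :: real poly))"
  have g0: "g \<noteq> 0" unfolding g_def by auto
  have gp: "poly g t \<ge> 0" if "t \<in> {-1<..<1}" for t using that unfolding g_def by (cases "a \<ge> 0") auto
  obtain Y where Y: "finite Y" "Y \<subseteq> {-1<..<1}" "\<forall>z\<in>Y. poly (Pa w n a) z = 0" "card Y \<ge> n - 1"
  proof -
    have orth: "wip w (Pa w n a) (g * q) = 0" if "degree q < n - 1" for q
      using Pa_orth[OF that, of a] unfolding g_def .
    show ?thesis using ortho_roots[OF gw Pa_ne0 g0 gp orth] that by blast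
  qed
  assume "poly (Pa w n a) t = 0"
  then show ?thesis
    using radau_roots[OF Y(1,2,3) _ Pa_deg Pa_signs] Y(4) by auto
qed

lemma no_common_root: "\<not> (poly \<phi> x = 0 \<and> poly \<psi> x = 0)"
proof
  assume a: "poly \<phi> x = 0 \<and> poly \<psi> x = 0"
  obtain A where A: "\<phi> = [:-x,1:] * A" using a by (auto simp: poly_eq_0_iff_dvd elim: dvdE)
  obtain B where B: "\<psi> = [:-x,1:] * B" using a by (auto simp: poly_eq_0_iff_dvd elim: dvdE)
  have A0: "A \<noteq> 0" and B0: "B \<noteq> 0" using A B phi_ne0 psi_ne0 by auto
  have dA: "degree A = n - 1" using A A0 phi_deg by (simp add: degree_mult_eq del: mult_pCons_left)
  have dB: "degree B + 1 = n - 1" using B B0 psi_deg by (simp add: degree_mult_eq del: mult_pCons_left)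
  have lA: "lead_coeff A = lead_coeff \<phi>" using A by (simp add: lead_coeff_mult del: mult_pCons_left)
  have lB: "lead_coeff B = lead_coeff \<psi>" using B by (simp add: lead_coeff_mult del: mult_pCons_left)
  have e1: "wip w2 \<psi> A = lead_coeff \<phi> / lead_coeff \<psi>"
    using ortho_lead[OF gw2 psi_o dA] lA by simp
  have "wip w2 \<psi> A = wip w \<psi> ([:1,0,-1:] * A)" by (rule wip_1mt2)
  also have "\<dots> = wip w \<phi> ([:1,0,-1:] * B)"
    by (rule wip_cong) (simp add: A B algebra_simps del: mult_pCons_left)
  also have "\<dots> = lead_coeff ([:1,0,-1:] * B) / lead_coeff \<phi>"
  proof (rule ortho_lead[OF gw phi_o])
    show "degree ([:1,0,-1:] * B) = n" using B0 dB by (simp add: degree_mult_eq del: mult_pCons_left)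
  qed
  also have "lead_coeff ([:1,0,-1:] * B) = - lead_coeff \<psi>"
    using lB by (simp add: lead_coeff_mult del: mult_pCons_left)
  finally have "lead_coeff \<phi> / lead_coeff \<psi> = - lead_coeff \<psi> / lead_coeff \<phi>" using e1 by simp
  moreover have "lead_coeff \<phi> / lead_coeff \<psi> > 0" "- lead_coeff \<psi> / lead_coeff \<phi> < 0"
    using phi_lead psi_lead by auto
  ultimately show False by linarith
qed

end


context wsetup begin

lemma xi_ok: "finite (xi_set w n a) \<and> xi_set w n a \<subseteq> {-1<..<1}"
  unfolding xi_set_def using poly_roots_finite[OF Pa_ne0[of a]] Pa_roots[of a] by auto

lemma eta_ok: "finite (eta_set w n) \<and> eta_set w n \<subseteq> {-1..1}"
proof -
  have ne: "[:1,0,-1:] * \<psi> \<noteq> 0" using psi_ne0 by (simp del: mult_pCons_left)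
  have "t \<in> {-1..1}" if "poly ([:1,0,-1:] * \<psi>) t = 0" for t
  proof -
    from that have "1 - t * t = 0 \<or> poly \<psi> t = 0" by (auto simp: algebra_simps)
    then show ?thesis
    proof
      assume "1 - t * t = 0"
      then have "t * t = 1" by simp
      then have "t = 1 \<or> t = -1" by (simp add: square_eq_1_iff)
      then show ?thesis by auto
    qed (use psi_signs(3)[of t] in auto)
  qed
  then show ?thesis unfolding eta_set_def using poly_roots_finite[OF ne] by auto
qed

lemma node_set_ok: "finite (node_set w n a) \<and> node_set w n a \<subseteq> {-1..1}"
  unfolding node_set_def using xi_ok[of a] by auto

lemma ns_ok: "S \<in> node_sets w n \<Longrightarrow> finite S \<and> S \<subseteq> {-1..1}"
  unfolding node_sets_def using eta_ok node_set_ok by auto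

lemma mem_eta: "-1 < x \<Longrightarrow> x < 1 \<Longrightarrow> x \<in> eta_set w n \<longleftrightarrow> poly \<psi> x = 0"
proof -
  assume x: "-1 < x" "x < 1"
  then have "x\<^sup>2 < 1" by (simp add: abs_square_less_1 abs_less_iff)
  then have "x * x < 1" by (simp add: power2_eq_square)
  then have "1 - x * x \<noteq> 0" by simp
  then show ?thesis unfolding eta_set_def by (simp add: algebra_simps)
qed

lemma mem_ns: "-1 < x \<Longrightarrow> x < 1 \<Longrightarrow> x \<in> node_set w n a \<longleftrightarrow> poly (Pa w n a) x = 0"
  unfolding node_set_def xi_set_def by auto

definition Aof :: "real \<Rightarrow> real" where
  "Aof x = (if poly \<phi> x / poly \<psi> x \<ge> 0 then poly \<phi> x / poly \<psi> x / (1 - x)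
            else poly \<phi> x / poly \<psi> x / (1 + x))"

definition S0 :: "real \<Rightarrow> real set" where
  "S0 x = (if poly \<psi> x = 0 then eta_set w n else node_set w n (Aof x))"

lemma S0_in:
  assumes x: "-1 < x" "x < 1"
  shows "S0 x \<in> node_sets w n \<and> x \<in> S0 x"
proof (cases "poly \<psi> x = 0")
  case True then show ?thesis unfolding S0_def node_sets_def using mem_eta[OF x] by auto
next
  case False
  define r where "r = poly \<phi> x / poly \<psi> x"
  have phr: "poly \<phi> x = r * poly \<psi> x" unfolding r_def using False by simp
  have "poly (Pa w n (Aof x)) x = 0"
  proof (cases "r \<ge> 0")
    case True
    then have A: "Aof x = r / (1 - x)" unfolding Aof_def r_def by simp
    then have "Aof x \<ge> 0" using True x by simp
    then show ?thesis unfolding poly_Pa using A x phr by simp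
  next
    case False
    then have A: "Aof x = r / (1 + x)" unfolding Aof_def r_def by simp
    then have "\<not> Aof x \<ge> 0" using False x by (simp add: divide_less_0_iff not_le)
    then show ?thesis unfolding poly_Pa using A x phr by simp
  qed
  then show ?thesis unfolding S0_def node_sets_def using False mem_ns[OF x] by auto
qed

lemma S0_unique:
  assumes x: "-1 < x" "x < 1" and S: "S \<in> node_sets w n" "x \<in> S"
  shows "S = S0 x"
proof -
  from S(1) consider "S = eta_set w n" | a where "S = node_set w n a" unfolding node_sets_def by auto
  then show ?thesis
  proof cases
    case 1 then show ?thesis using S(2) mem_eta[OF x] unfolding S0_def by auto
  next
    case 2
    then have P0: "poly (Pa w n a) x = 0" using S(2) mem_ns[OF x] by auto
    have psi0: "poly \<psi> x \<noteq> 0"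
    proof
      assume "poly \<psi> x = 0"
      then have "poly \<phi> x = 0" using P0 unfolding poly_Pa by (auto split: if_splits)
      then show False using no_common_root \<open>poly \<psi> x = 0\<close> by auto
    qed
    have "Aof x = a"
    proof (cases "a \<ge> 0")
      case True
      then have "poly \<phi> x = a * (1 - x) * poly \<psi> x" using P0 unfolding poly_Pa by simp
      then have r: "poly \<phi> x / poly \<psi> x = a * (1 - x)" using psi0 by simp
      then have "poly \<phi> x / poly \<psi> x \<ge> 0" using True x by simp
      then show ?thesis unfolding Aof_def r using x by simp
    next
      case False
      then have "poly \<phi> x = a * (1 + x) * poly \<psi> x" using P0 unfolding poly_Pa by simp
      then have r: "poly \<phi> x / poly \<psi> x = a * (1 + x)" using psi0 by simp
      then have "\<not> poly \<phi> x / poly \<psi> x \<ge> 0" using False x by (simp add: mult_less_0_iff not_le)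
      then show ?thesis unfolding Aof_def r using x by simp
    qed
    then show ?thesis unfolding S0_def using psi0 2 by simp
  qed
qed

lemma Sx_props:
  assumes x: "-1 < x" "x < 1"
  shows "finite (Sx w n x) \<and> Sx w n x \<subseteq> {-1..1} \<and> x \<in> Sx w n x"
proof -
  have "Sx w n x = S0 x"
    unfolding Sx_def by (rule the_equality) (use S0_in[OF x] S0_unique[OF x] in auto)
  then show ?thesis using S0_in[OF x] ns_ok by auto
qed

end


lemma lin_deriv: fixes R :: "real poly" shows "poly (pderiv ([:-u,1:] * R)) u = poly R u"
  by (simp add: pderiv_mult pderiv_pCons del: mult_pCons_left)

lemma lin2_deriv: fixes R :: "real poly" shows "poly (pderiv ([:-u,1:] * ([:-u,1:] * R))) u = 0"
  by (simp add: pderiv_mult pderiv_pCons del: mult_pCons_left)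

definition herm :: "real set \<Rightarrow> real set \<Rightarrow> (real \<Rightarrow> real) \<Rightarrow> real poly \<Rightarrow> bool" where
  "herm A D f p \<longleftrightarrow> (\<forall>u\<in>A. poly p u = f u) \<and> (\<forall>u\<in>D. poly (pderiv p) u = 0)"

lemma pr_split: "finite A \<Longrightarrow> u \<in> A \<Longrightarrow> pr A = [:-u,1:] * pr (A - {u})"
  using pr_insert[of "A - {u}" u] by (simp add: insert_absorb)

lemma lagrange: fixes f :: "real \<Rightarrow> real" shows "finite A \<Longrightarrow> \<exists>p. (p = 0 \<or> degree p < card A) \<and> (\<forall>u\<in>A. poly p u = f u)"
proof (induction A rule: finite_induct)
  case empty then show ?case by auto
next
  case (insert v A)
  obtain p where p: "p = 0 \<or> degree p < card A" "\<forall>u\<in>A. poly p u = f u" using insert.IH by blast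
  define c where "c = (f v - poly p v) / poly (pr A) v"
  have nz: "poly (pr A) v \<noteq> 0" using insert pr_zero by auto
  define q where "q = p + smult c (pr A)"
  have "degree q \<le> card A"
    unfolding q_def using p(1) pr_deg[OF insert(1)]
    by (auto intro!: degree_add_le order.trans[OF degree_smult_le])
  then have "q = 0 \<or> degree q < card (insert v A)" using insert by auto
  moreover have "\<forall>u\<in>insert v A. poly q u = f u"
    unfolding q_def using p(2) nz insert pr_zero[OF insert(1)] by (auto simp: c_def)
  ultimately show ?case by blast
qed

lemma herm_exists:
  assumes A: "finite A" and D: "D \<subseteq> A"
  shows "\<exists>p. (p = 0 \<or> degree p < card A + card D) \<and> herm A D f p"
proof -
  have fD: "finite D" using A D finite_subset by auto
  show ?thesis using fD D
  proof (induction D rule: finite_induct)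
    case empty
    then show ?case using lagrange[OF A, of f] unfolding herm_def by auto
  next
    case (insert u D)
    obtain p where p: "p = 0 \<or> degree p < card A + card D" "herm A D f p" using insert by auto
    define om where "om = pr A * pr D"
    have uA: "u \<in> A" using insert by auto
    have om_u: "om = [:-u,1:] * (pr (A - {u}) * pr D)"
      unfolding om_def using pr_split[OF A uA] by (simp add: mult.assoc del: mult_pCons_left)
    have nz: "poly (pderiv om) u \<noteq> 0"
      unfolding om_u lin_deriv using insert(2) pr_zero[OF insert(1)] pr_zero[of "A - {u}"] A
      by auto
    define c where "c = - poly (pderiv p) u / poly (pderiv om) u"
    define q where "q = p + smult c om"
    have dom: "degree om = card A + card D" unfolding om_def
      using pr_deg[OF A] pr_deg[OF insert(1)] by (simp add: degree_mult_eq)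
    have "degree q \<le> card A + card D"
      unfolding q_def using p(1) dom
      by (auto intro!: degree_add_le order.trans[OF degree_smult_le])
    then have "q = 0 \<or> degree q < card A + card (insert u D)" using insert by auto
    moreover have "herm A (insert u D) f q"
      unfolding herm_def
    proof (intro conjI ballI)
      fix v assume "v \<in> A"
      then show "poly q v = f v" using p(2) unfolding herm_def q_def om_def
        using pr_zero[OF A] by auto
    next
      fix v assume v: "v \<in> insert u D"
      show "poly (pderiv q) v = 0"
      proof (cases "v = u")
        case True then show ?thesis unfolding q_def c_def using nz
          by (simp add: pderiv_add pderiv_diff pderiv_smult field_simps)
      next
        case False
        then have vD: "v \<in> D" using v by auto
        then have vA: "v \<in> A" using insert by auto
        have "om = [:-v,1:] * ([:-v,1:] * (pr (A - {v}) * pr (D - {v})))"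
          unfolding om_def using pr_split[OF A vA] pr_split[OF insert(1) vD]
          by (simp add: mult_ac del: mult_pCons_left)
        then have "poly (pderiv om) v = 0" using lin2_deriv by simp
        then show ?thesis unfolding q_def using p(2) vD unfolding herm_def
          by (simp add: pderiv_add pderiv_smult)
      qed
    qed
    ultimately show ?case by blast
  qed
qed

lemma herm_unique:
  assumes A: "finite A" and D: "D \<subseteq> A"
    and p: "p = 0 \<or> degree p < card A + card D" "herm A D f p"
    and q: "q = 0 \<or> degree q < card A + card D" "herm A D f q"
  shows "p = q"
proof (rule ccontr)
  assume ne: "p \<noteq> q"
  define d where "d = p - q"
  have d0: "d \<noteq> 0" using ne d_def by auto
  have fD: "finite D" using A D finite_subset by auto
  have dd: "degree d < card A + card D"
  proof -
    have "degree d \<le> max (degree p) (degree q)" unfolding d_def by (rule degree_diff_le_max)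
    moreover have "card A + card D > 0" using d0 p q d_def by auto
    ultimately show ?thesis using p(1) q(1) by auto
  qed
  have dA: "\<forall>u\<in>A. poly d u = 0" using p(2) q(2) unfolding herm_def d_def by auto
  have dD: "\<forall>u\<in>D. poly (pderiv d) u = 0" using p(2) q(2) unfolding herm_def d_def
    by (auto simp: pderiv_diff)
  obtain G where G: "d = G * pr A" using FL[OF A dA] by blast
  have "\<forall>u\<in>D. poly G u = 0"
  proof
    fix u assume uD: "u \<in> D"
    then have uA: "u \<in> A" using D by auto
    have deq: "d = [:-u,1:] * (G * pr (A - {u}))" using G pr_split[OF A uA] by (simp add: mult_ac del: mult_pCons_left)
    have "poly (pderiv d) u = poly (G * pr (A - {u})) u" unfolding deq by (rule lin_deriv)
    then have "poly (pderiv d) u = poly G u * poly (pr (A - {u})) u" by simp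
    moreover have "poly (pr (A - {u})) u \<noteq> 0" using pr_zero[of "A - {u}" u] A by auto
    ultimately show "poly G u = 0" using dD uD by auto
  qed
  then obtain H where H: "G = H * pr D" using FL[OF fD] by blast
  have H0: "H \<noteq> 0" using d0 G H by auto
  have "degree d = degree H + card D + card A" using G H H0 pr_deg[OF A] pr_deg[OF fD]
    by (simp add: degree_mult_eq)
  then show False using dd by auto
qed



lemma parity:
  fixes f :: "real poly"
  assumes f0: "f \<noteq> 0" and Z: "finite Z" "\<forall>z\<in>Z. poly f z = 0" and d: "degree f \<le> card Z"
    and ab: "a < b" "a \<notin> Z" "b \<notin> Z"
  shows "poly f a \<noteq> 0" "poly f a * poly f b > 0 \<longleftrightarrow> even (card (Z \<inter> {a<..<b}))"
proof -
  have fe: "f = smult (lead_coeff f) (pr Z)" using conjunct1[OF full_roots[OF Z f0 d]] .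
  have c0: "lead_coeff f \<noteq> 0" using f0 by simp
  show "poly f a \<noteq> 0" using ab(2) c0 pr_zero[OF Z(1), of a] by (subst fe) simp
  define g where "g = (\<lambda>z. (a - z) * (b - z))"
  define M where "M = Z \<inter> {a<..<b}"
  have fM: "finite M" "M \<subseteq> Z" using Z(1) unfolding M_def by auto
  have "poly f a * poly f b = (lead_coeff f * lead_coeff f) * (\<Prod>z\<in>Z. g z)"
    by (subst (1 2) fe) (simp add: poly_pr g_def prod.distrib mult_ac)
  also have "(\<Prod>z\<in>Z. g z) = (\<Prod>z\<in>Z - M. g z) * (\<Prod>z\<in>M. g z)"
    by (rule prod.subset_diff[OF fM(2) Z(1)])
  also have "(\<Prod>z\<in>M. g z) = (-1)^card M * (\<Prod>z\<in>M. - g z)"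
    using prod_uminus[of "\<lambda>z. - g z" M] by simp
  finally have eq: "poly f a * poly f b = (lead_coeff f * lead_coeff f) * ((\<Prod>z\<in>Z - M. g z) * (\<Prod>z\<in>M. - g z)) * (-1)^card M"
    by (simp add: mult_ac)
  have p1: "(\<Prod>z\<in>Z - M. g z) > 0"
  proof (rule prod_pos)
    fix z assume z: "z \<in> Z - M"
    have "z \<noteq> a" "z \<noteq> b" using z ab by auto
    then have "z < a \<or> z > b" using z unfolding M_def by auto
    then show "g z > 0" unfolding g_def using ab(1) by (auto intro: mult_pos_pos mult_neg_neg)
  qed
  have p2: "(\<Prod>z\<in>M. - g z) > 0"
  proof (rule prod_pos)
    fix z assume z: "z \<in> M"
    then have "a < z" "z < b" unfolding M_def by auto
    then show "- g z > 0" unfolding g_def by (simp add: mult_less_0_iff)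
  qed
  have cc: "lead_coeff f * lead_coeff f > 0" using c0 by (simp add: not_square_less_zero less_le)
  define Q where "Q = (lead_coeff f * lead_coeff f) * ((\<Prod>z\<in>Z - M. g z) * (\<Prod>z\<in>M. - g z))"
  have Q: "Q > 0" unfolding Q_def using cc p1 p2 by simp
  show "poly f a * poly f b > 0 \<longleftrightarrow> even (card (Z \<inter> {a<..<b}))"
    unfolding M_def[symmetric] eq Q_def[symmetric]
    using Q by (cases "even (card M)") (auto simp: zero_less_mult_iff)
qed

definition sl :: "real set \<Rightarrow> nat \<Rightarrow> real" where
  "sl S i = sorted_list_of_set S ! i"

definition jx :: "real set \<Rightarrow> real \<Rightarrow> nat" where
  "jx S x = (SOME i. i < card S \<and> sl S i = x)"

definition Dset :: "real set \<Rightarrow> real \<Rightarrow> real set" where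
  "Dset S x = (S - {x}) \<inter> {-1<..<1}"

definition vfun :: "real \<Rightarrow> real \<Rightarrow> real" where
  "vfun x u = (if u \<le> x then 1 else 0)"

locale cfg =
  fixes S :: "real set" and x :: real and p :: "real poly"
  assumes fin: "finite S" and sub: "S \<subseteq> {-1..1}" and xS: "x \<in> S" and xl: "-1 < x" and xr: "x < 1"
    and vals: "\<forall>u\<in>S. poly p u = vfun x u"
    and ders: "\<forall>u\<in>Dset S x. poly (pderiv p) u = 0"
    and deg: "p = 0 \<or> degree p < card S + card (Dset S x)"
begin

abbreviation "s \<equiv> sl S"
abbreviation "K \<equiv> card S"
abbreviation "j \<equiv> jx S x"
abbreviation "D \<equiv> Dset S x"

lemma s_mono: "i < l \<Longrightarrow> l < K \<Longrightarrow> s i < s l"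
  unfolding sl_def using sorted_wrt_nth_less[OF strict_sorted_list_of_set[of S]] fin
  by (simp add: length_sorted_list_of_set)

lemma s_mem: "i < K \<Longrightarrow> s i \<in> S"
  unfolding sl_def using fin nth_mem[of i "sorted_list_of_set S"]
  by (simp add: length_sorted_list_of_set)

lemma s_surj: "u \<in> S \<Longrightarrow> \<exists>i<K. s i = u"
  unfolding sl_def using fin by (metis in_set_conv_nth length_sorted_list_of_set set_sorted_list_of_set)

lemma s_less_iff: "i < K \<Longrightarrow> l < K \<Longrightarrow> s i < s l \<longleftrightarrow> i < l"
  using s_mono by (metis less_asym linorder_neqE_nat)

lemma s_le_iff: "i < K \<Longrightarrow> l < K \<Longrightarrow> s i \<le> s l \<longleftrightarrow> i \<le> l"
  using s_less_iff by (meson not_le)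

lemma s_eq_iff: "i < K \<Longrightarrow> l < K \<Longrightarrow> s i = s l \<longleftrightarrow> i = l"
  using s_less_iff by (metis less_irrefl linorder_neqE_nat)

lemma s_range: assumes "i < K" shows "-1 \<le> s i \<and> s i \<le> 1"
  using s_mem[OF assms] sub by auto

lemma j_prop: "j < K" "s j = x"
proof -
  have "\<exists>i. i < K \<and> s i = x" using s_surj[OF xS] by blast
  then have "j < K \<and> s j = x" unfolding jx_def by (rule someI_ex)
  then show "j < K" "s j = x" by auto
qed

lemma D_sub: "D \<subseteq> S" unfolding Dset_def by auto
lemma fD: "finite D" using fin D_sub finite_subset by auto

lemma p_one:
  assumes "Suc j = K"
  shows "p = 1"
proof -
  have all: "\<forall>u\<in>S. u \<le> x"
  proof
    fix u assume "u \<in> S"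
    then obtain i where "i < K" "s i = u" using s_surj by blast
    then show "u \<le> x" using j_prop s_le_iff[of i j] assms by auto
  qed
  have K1: "K \<ge> 1" using assms by simp
  show ?thesis
  proof (rule herm_unique[OF fin D_sub, of p "vfun x" 1])
    show "p = 0 \<or> degree p < K + card D" using deg .
    show "herm S D (vfun x) p" unfolding herm_def using vals ders by auto
    show "(1::real poly) = 0 \<or> degree (1::real poly) < K + card D" using K1 by simp
    show "herm S D (vfun x) 1" unfolding herm_def vfun_def using all by auto
  qed
qed

end


definition rp :: "real set \<Rightarrow> real poly \<Rightarrow> nat \<Rightarrow> real" where
  "rp S p i = (SOME r. sl S i < r \<and> r < sl S (Suc i) \<and> poly (pderiv p) r = 0)"

locale cfg2 = cfg +
  assumes jlt: "Suc (jx S x) < card S"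
begin

abbreviation "r \<equiv> rp S p"
definition "I = {i. Suc i < K \<and> i \<noteq> j}"
definition "Z = D \<union> r ` I"

lemma v_s: "i < K \<Longrightarrow> poly p (s i) = (if i \<le> j then 1 else 0)"
  using vals s_mem[of i] j_prop s_le_iff[of i j] unfolding vfun_def by auto

lemma rp_prop: assumes i: "i \<in> I" shows "s i < r i" "r i < s (Suc i)" "poly (pderiv p) (r i) = 0"
proof -
  have i1: "Suc i < K" "i \<noteq> j" using i unfolding I_def by auto
  have lt: "s i < s (Suc i)" using s_mono i1 by simp
  have eq: "poly p (s i) = poly p (s (Suc i))" using v_s[of i] v_s[of "Suc i"] i1 by auto
  obtain \<xi> where xi: "s i < \<xi>" "\<xi> < s (Suc i)" "poly p (s (Suc i)) - poly p (s i) = (s (Suc i) - s i) * poly (pderiv p) \<xi>"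
    using poly_MVT[OF lt, of p] by blast
  then have "poly (pderiv p) \<xi> = 0" using eq lt by simp
  then have "\<exists>r. s i < r \<and> r < s (Suc i) \<and> poly (pderiv p) r = 0" using xi by blast
  then have "s i < r i \<and> r i < s (Suc i) \<and> poly (pderiv p) (r i) = 0"
    unfolding rp_def by (rule someI_ex)
  then show "s i < r i" "r i < s (Suc i)" "poly (pderiv p) (r i) = 0" by auto
qed

lemma r_notin_S: assumes i: "i \<in> I" shows "r i \<notin> S"
proof
  assume "r i \<in> S"
  then obtain m where m: "m < K" "s m = r i" using s_surj by blast
  have i1: "Suc i < K" using i unfolding I_def by auto
  have "s i < s m" "s m < s (Suc i)" using rp_prop[OF i] m by auto
  then have "i < m" "m < Suc i" using s_less_iff[of i m] s_less_iff[of m "Suc i"] m i1 by auto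
  then show False by simp
qed

lemma r_mono: assumes "i \<in> I" "l \<in> I" "i < l" shows "r i < r l"
proof -
  have "Suc i \<le> l" "l < K" using assms unfolding I_def by auto
  then have "s (Suc i) \<le> s l" using s_le_iff[of "Suc i" l] by auto
  then show ?thesis using rp_prop[OF assms(1)] rp_prop[OF assms(2)] by auto
qed

lemma r_inj: "inj_on r I"
proof (rule inj_onI)
  fix i l assume "i \<in> I" "l \<in> I" "r i = r l"
  then show "i = l" using r_mono by (metis less_irrefl linorder_neqE_nat)
qed

lemma Zroots: "z \<in> Z \<Longrightarrow> poly (pderiv p) z = 0"
  unfolding Z_def using ders rp_prop(3) by auto

lemma finI: "finite I" unfolding I_def by (rule finite_subset[of _ "{..<K}"]) auto

lemma finZ: "finite Z" unfolding Z_def using fD finI by auto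

lemma cardI: "card I = K - 2"
proof -
  have "I = {..<K - 1} - {j}" unfolding I_def by auto
  moreover have "j \<in> {..<K - 1}" using jlt by auto
  ultimately show ?thesis by simp
qed

lemma cardZ: "card Z = card D + (K - 2)"
proof -
  have "D \<inter> r ` I = {}" using r_notin_S D_sub by auto
  then have "card Z = card D + card (r ` I)" unfolding Z_def using fD finI by (simp add: card_Un_disjoint)
  also have "card (r ` I) = card I" using r_inj by (simp add: card_image)
  finally show ?thesis using cardI by simp
qed

lemma pd_ne0: "pderiv p \<noteq> 0"
proof
  assume "pderiv p = 0"
  then have "degree p = 0" by (simp add: pderiv_eq_0_iff)
  then have "p = [:coeff p 0:]" using degree_0_id[of p] by simp
  then have "poly p (s j) = poly p (s (Suc j))" by (metis poly_pCons poly_0 mult_zero_right add_0_right)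
  then show False using v_s[of j] v_s[of "Suc j"] j_prop jlt by auto
qed

lemma degZ: "degree (pderiv p) \<le> card Z"
proof -
  have "p \<noteq> 0" using pd_ne0 by auto
  then have "degree p < K + card D" using deg by auto
  then show ?thesis unfolding degree_pderiv cardZ using jlt by linarith
qed

lemma PZ: assumes "t1 < t2" "t1 \<notin> Z" "t2 \<notin> Z"
  shows "poly (pderiv p) t1 \<noteq> 0" "poly (pderiv p) t1 * poly (pderiv p) t2 > 0 \<longleftrightarrow> even (card (Z \<inter> {t1<..<t2}))"
  using parity[OF pd_ne0 finZ _ degZ assms] Zroots by auto

lemma same: assumes "t1 < t2" "t1 \<notin> Z" "t2 \<notin> Z" "Z \<inter> {t1<..<t2} = {}"
  shows "poly (pderiv p) t1 * poly (pderiv p) t2 > 0"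
  using PZ[OF assms(1-3)] assms(4) by simp

lemma root_iff: "poly (pderiv p) t = 0 \<longleftrightarrow> t \<in> Z"
proof -
  have e: "pderiv p = smult (lead_coeff (pderiv p)) (pr Z)"
    using conjunct1[OF full_roots[OF finZ _ pd_ne0 degZ]] Zroots by auto
  have "lead_coeff (pderiv p) \<noteq> 0" using pd_ne0 by simp
  then show ?thesis using pr_zero[OF finZ, of t] by (subst e) simp
qed

lemma opp: assumes "t1 < t2" "t1 \<notin> Z" "t2 \<notin> Z" "Z \<inter> {t1<..<t2} = {z}"
  shows "poly (pderiv p) t1 * poly (pderiv p) t2 < 0"
proof -
  have "poly (pderiv p) t1 \<noteq> 0" "poly (pderiv p) t2 \<noteq> 0" using root_iff assms by auto
  moreover have "\<not> poly (pderiv p) t1 * poly (pderiv p) t2 > 0" using PZ(2)[OF assms(1-3)] assms(4) by simp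
  ultimately show ?thesis by (simp add: not_less less_le)
qed

lemma gapZ: assumes "Suc i < K" shows "Z \<inter> {s i<..<s (Suc i)} = (if i = j then {} else {r i})"
proof -
  have a: "z \<notin> D" if "s i < z" "z < s (Suc i)" for z
  proof
    assume "z \<in> D"
    then obtain m where m: "m < K" "s m = z" using s_surj D_sub by blast
    then have "i < m" "m < Suc i" using s_less_iff[of i m] s_less_iff[of m "Suc i"] that assms by auto
    then show False by simp
  qed
  have b: "l = i" if "l \<in> I" "s i < r l" "r l < s (Suc i)" for l
  proof (rule ccontr)
    assume "l \<noteq> i"
    then consider "l < i" | "i < l" by linarith
    then show False
    proof cases
      case 1
      then have "s (Suc l) \<le> s i" using s_le_iff[of "Suc l" i] assms by auto
      then show False using rp_prop(2)[OF that(1)] that(2) by auto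
    next
      case 2
      then have "s (Suc i) \<le> s l" using s_le_iff[of "Suc i" l] that(1) unfolding I_def by auto
      then show False using rp_prop(1)[OF that(1)] that(3) by auto
    qed
  qed
  show ?thesis
  proof (cases "i = j")
    case True
    have "r l \<notin> {s i<..<s (Suc i)}" if "l \<in> I" for l using b[of l] that True unfolding I_def by auto
    then show ?thesis using a True unfolding Z_def by auto
  next
    case False
    then have iI: "i \<in> I" using assms unfolding I_def by auto
    have "Z \<inter> {s i<..<s (Suc i)} = {r i}"
    proof (intro equalityI subsetI)
      fix z assume z: "z \<in> Z \<inter> {s i<..<s (Suc i)}"
      then have zD: "z \<notin> D" using a by auto
      then obtain l where l: "l \<in> I" "z = r l" using z unfolding Z_def by auto
      then have "l = i" using b[OF l(1)] z by auto
      then show "z \<in> {r i}" using l by simp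
    next
      fix z assume "z \<in> {r i}"
      then show "z \<in> Z \<inter> {s i<..<s (Suc i)}" using rp_prop[OF iI] iI unfolding Z_def by auto
    qed
    then show ?thesis using False by simp
  qed
qed

lemma nodeZ: assumes "i < K" shows "s i \<in> Z \<longleftrightarrow> i \<noteq> j \<and> -1 < s i \<and> s i < 1"
proof -
  have "s i \<notin> r ` I" using r_notin_S s_mem[OF assms] by auto
  moreover have "s i \<in> D \<longleftrightarrow> i \<noteq> j \<and> -1 < s i \<and> s i < 1"
    unfolding Dset_def using s_mem[OF assms] s_eq_iff[OF assms j_prop(1)] j_prop(2) by auto
  ultimately show ?thesis unfolding Z_def by auto
qed

lemma Z_range: "z \<in> Z \<Longrightarrow> s 0 \<le> z \<and> z \<le> s (K - 1)"
proof -
  assume z: "z \<in> Z"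
  have K: "0 < K" using jlt by simp
  have bnd: "s 0 \<le> s m \<and> s m \<le> s (K - 1)" if "m < K" for m
    using s_le_iff[of 0 m] s_le_iff[of m "K - 1"] that K by auto
  show ?thesis
  proof (cases "z \<in> D")
    case True
    then obtain m where "m < K" "s m = z" using s_surj D_sub by blast
    then show ?thesis using bnd by auto
  next
    case False
    then obtain l where l: "l \<in> I" "z = r l" using z unfolding Z_def by auto
    then have "Suc l < K" unfolding I_def by auto
    then show ?thesis using bnd[of l] bnd[of "Suc l"] rp_prop[OF l(1)] l by auto
  qed
qed

lemma split3: "a < b \<Longrightarrow> b < c \<Longrightarrow> Z \<inter> {a<..<c} = (Z \<inter> {a<..<b}) \<union> (Z \<inter> {b}) \<union> (Z \<inter> {b<..<c})"
  by auto

lemma in_gap_notZ: assumes "Suc i < K" "s i < t" "t < s (Suc i)" "i \<noteq> j \<Longrightarrow> t \<noteq> r i"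
  shows "t \<notin> Z"
proof
  assume "t \<in> Z"
  then have "t \<in> Z \<inter> {s i<..<s (Suc i)}" using assms by auto
  then show False using gapZ[OF assms(1)] assms(4) by (cases "i = j") auto
qed

lemma sub_gap: assumes "s i \<le> t1" "t2 \<le> s (Suc i)"
  shows "Z \<inter> {t1<..<t2} = (Z \<inter> {s i<..<s (Suc i)}) \<inter> {t1<..<t2}"
proof -
  have "{t1<..<t2} \<subseteq> {s i<..<s (Suc i)}" using assms by auto
  then show ?thesis by blast
qed

end


context cfg2 begin

abbreviation "dp t \<equiv> poly (pderiv p) t"

definition "up i \<longleftrightarrow> (\<forall>t. s i < t \<and> t < r i \<longrightarrow> dp t > 0)"
definition "dn i \<longleftrightarrow> (\<forall>t. r i < t \<and> t < s (Suc i) \<longrightarrow> dp t < 0)"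

lemma x_notZ: "x \<notin> Z" using nodeZ[OF j_prop(1)] j_prop(2) by auto

lemma jgap: "Z \<inter> {x<..<s (Suc j)} = {}" using gapZ[OF jlt] j_prop(2) by simp

lemma x_lt: "x < s (Suc j)" using s_mono[OF _ jlt, of j] j_prop(2) by simp

lemma XX: "dp x < 0"
proof -
  obtain \<xi> where xi: "x < \<xi>" "\<xi> < s (Suc j)" "poly p (s (Suc j)) - poly p x = (s (Suc j) - x) * dp \<xi>"
    using poly_MVT[OF x_lt, of p] by blast
  have "poly p (s (Suc j)) = 0" "poly p x = 1" using v_s[OF jlt] v_s[OF j_prop(1)] j_prop(2) by auto
  then have "(s (Suc j) - x) * dp \<xi> < 0" using xi(3) by simp
  then have neg: "dp \<xi> < 0" using x_lt by (simp add: mult_less_0_iff)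
  have "\<xi> \<notin> Z" using jgap xi by auto
  moreover have "Z \<inter> {x<..<\<xi>} = {}" using jgap xi by auto
  ultimately have "dp x * dp \<xi> > 0" using same[OF xi(1) x_notZ] by simp
  then show ?thesis using neg by (simp add: zero_less_mult_iff)
qed

lemma XN: "x < t \<Longrightarrow> t < s (Suc j) \<Longrightarrow> dp t < 0"
proof -
  assume t: "x < t" "t < s (Suc j)"
  have "t \<notin> Z" "Z \<inter> {x<..<t} = {}" using jgap t by auto
  then have "dp x * dp t > 0" using same[OF t(1) x_notZ] by simp
  then show ?thesis using XX by (simp add: zero_less_mult_iff)
qed

lemma XN1: "s (Suc j) = 1 \<Longrightarrow> dp 1 < 0"
proof -
  assume e: "s (Suc j) = 1"
  have "1 \<notin> Z" using nodeZ[OF jlt] e by auto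
  moreover have "Z \<inter> {x<..<1} = {}" using jgap e by simp
  ultimately have "dp x * dp 1 > 0" using same[OF _ x_notZ] xr by simp
  then show ?thesis using XX by (simp add: zero_less_mult_iff)
qed

lemma I_simp: "i \<in> I \<longleftrightarrow> Suc i < K \<and> i \<noteq> j" unfolding I_def by simp

lemma gapI: "i \<in> I \<Longrightarrow> Z \<inter> {s i<..<s (Suc i)} = {r i}" using gapZ[of i] by (auto simp: I_simp)

lemma notZ_I: "i \<in> I \<Longrightarrow> s i < t \<Longrightarrow> t < s (Suc i) \<Longrightarrow> t \<noteq> r i \<Longrightarrow> t \<notin> Z"
  using in_gap_notZ[of i t] by (auto simp: I_simp)

lemma oppG1: assumes i: "i \<in> I" and t: "s i < t1" "t1 < r i" "r i < t2" "t2 < s (Suc i)"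
  shows "dp t1 * dp t2 < 0"
proof (rule opp)
  note R = rp_prop[OF i]
  have Si: "Suc i < K" using i by (simp add: I_simp)
  show "t1 < t2" using t by simp
  show "t1 \<notin> Z" using notZ_I[OF i, of t1] t R by auto
  show "t2 \<notin> Z" using notZ_I[OF i, of t2] t R by auto
  show "Z \<inter> {t1<..<t2} = {r i}"
    using sub_gap[of i t1 t2] gapI[OF i] t R by auto
qed

lemma G1a: "i \<in> I \<Longrightarrow> up i \<Longrightarrow> dn i"
  unfolding up_def dn_def
proof (intro allI impI)
  fix t assume i: "i \<in> I" and u: "\<forall>t. s i < t \<and> t < r i \<longrightarrow> 0 < dp t" and t: "r i < t \<and> t < s (Suc i)"
  define t1 where "t1 = (s i + r i) / 2"
  have t1: "s i < t1" "t1 < r i" using rp_prop[OF i] unfolding t1_def by auto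
  have "dp t1 * dp t < 0" using oppG1[OF i t1] t by auto
  moreover have "dp t1 > 0" using u t1 by auto
  ultimately show "dp t < 0" by (simp add: mult_less_0_iff)
qed

lemma G1b: "i \<in> I \<Longrightarrow> dn i \<Longrightarrow> up i"
  unfolding up_def dn_def
proof (intro allI impI)
  fix t assume i: "i \<in> I" and u: "\<forall>t. r i < t \<and> t < s (Suc i) \<longrightarrow> dp t < 0" and t: "s i < t \<and> t < r i"
  define t2 where "t2 = (r i + s (Suc i)) / 2"
  have t2: "r i < t2" "t2 < s (Suc i)" using rp_prop[OF i] unfolding t2_def by auto
  have "dp t * dp t2 < 0" using oppG1[OF i _ _ t2] t by auto
  moreover have "dp t2 < 0" using u t2 by auto
  ultimately show "dp t > 0" by (simp add: mult_less_0_iff)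
qed

lemma node_inZ: assumes "Suc (Suc i) < K" "Suc i \<noteq> j" shows "s (Suc i) \<in> Z"
proof -
  have "s i < s (Suc i)" "s (Suc i) < s (Suc (Suc i))" using s_mono assms by auto
  moreover have "-1 \<le> s i" "s (Suc (Suc i)) \<le> 1" using s_range assms by auto
  ultimately show ?thesis using nodeZ[of "Suc i"] assms by auto
qed

lemma oppG2: assumes i: "i \<in> I" "Suc i \<in> I" and t: "r i < t2" "t2 < s (Suc i)" "s (Suc i) < t3" "t3 < r (Suc i)"
  shows "dp t2 * dp t3 < 0"
proof (rule opp)
  note R = rp_prop[OF i(1)] and R2 = rp_prop[OF i(2)]
  have SS: "Suc (Suc i) < K" "Suc i \<noteq> j" using i(2) by (auto simp: I_simp)
  show "t2 < t3" using t by simp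
  show "t2 \<notin> Z" using notZ_I[OF i(1), of t2] t R by auto
  show "t3 \<notin> Z" using notZ_I[OF i(2), of t3] t R2 by auto
  have "Z \<inter> {t2<..<t3} = (Z \<inter> {t2<..<s (Suc i)}) \<union> (Z \<inter> {s (Suc i)}) \<union> (Z \<inter> {s (Suc i)<..<t3})"
    using t by (intro split3) auto
  also have "Z \<inter> {t2<..<s (Suc i)} = {}" using sub_gap[of i t2 "s (Suc i)"] gapI[OF i(1)] t R by auto
  also have "Z \<inter> {s (Suc i)<..<t3} = {}"
    using sub_gap[of "Suc i" "s (Suc i)" t3] gapI[OF i(2)] t R2 by auto
  also have "Z \<inter> {s (Suc i)} = {s (Suc i)}" using node_inZ[OF SS] by auto
  finally show "Z \<inter> {t2<..<t3} = {s (Suc i)}" by simp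
qed

lemma G2a: assumes i: "i \<in> I" "Suc i \<in> I" and d: "dn i" shows "up (Suc i)"
  unfolding up_def
proof (intro allI impI)
  fix t assume t: "s (Suc i) < t \<and> t < r (Suc i)"
  define t2 where "t2 = (r i + s (Suc i)) / 2"
  have t2: "r i < t2" "t2 < s (Suc i)" using rp_prop[OF i(1)] unfolding t2_def by auto
  have "dp t2 * dp t < 0" using oppG2[OF i t2] t by auto
  moreover have "dp t2 < 0" using d t2 unfolding dn_def by auto
  ultimately show "dp t > 0" by (simp add: mult_less_0_iff)
qed

lemma G2b: assumes i: "i \<in> I" "Suc i \<in> I" and u: "up (Suc i)" shows "dn i"
  unfolding dn_def
proof (intro allI impI)
  fix t assume t: "r i < t \<and> t < s (Suc i)"
  define t3 where "t3 = (s (Suc i) + r (Suc i)) / 2"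
  have t3: "s (Suc i) < t3" "t3 < r (Suc i)" using rp_prop[OF i(2)] unfolding t3_def by auto
  have "dp t * dp t3 < 0" using oppG2[OF i _ _ t3] t by auto
  moreover have "dp t3 > 0" using u t3 unfolding up_def by auto
  ultimately show "dp t < 0" by (simp add: mult_less_0_iff)
qed

lemma G3: assumes "0 < j" shows "dn (j - 1)"
  unfolding dn_def
proof (intro allI impI)
  define i where "i = j - 1"
  have Si: "Suc i = j" using assms unfolding i_def by simp
  have iI: "i \<in> I" using Si j_prop(1) by (auto simp: I_simp)
  fix t assume "r (j - 1) < t \<and> t < s (Suc (j - 1))"
  then have t: "r i < t" "t < x" using Si j_prop(2) unfolding i_def by auto
  have "t \<notin> Z" using notZ_I[OF iI, of t] t rp_prop[OF iI] Si j_prop(2) by auto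
  moreover have "Z \<inter> {t<..<x} = {}"
    using sub_gap[of i t x] gapI[OF iI] t Si j_prop(2) rp_prop[OF iI] by auto
  ultimately have "dp t * dp x > 0" using same[OF t(2) _ x_notZ] by simp
  then show "dp t < 0" using XX by (simp add: zero_less_mult_iff)
qed

lemma G4: assumes "Suc (Suc j) < K" shows "up (Suc j)"
  unfolding up_def
proof (intro allI impI)
  have iI: "Suc j \<in> I" using assms by (auto simp: I_simp)
  note R = rp_prop[OF iI]
  fix t assume t: "s (Suc j) < t \<and> t < r (Suc j)"
  define t' where "t' = (x + s (Suc j)) / 2"
  have t': "x < t'" "t' < s (Suc j)" using x_lt unfolding t'_def by auto
  have "dp t' * dp t < 0"
  proof (rule opp)
    show "t' < t" using t t' by simp
    show "t' \<notin> Z" using jgap t' by auto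
    show "t \<notin> Z" using notZ_I[OF iI, of t] t R by auto
    have "Z \<inter> {t'<..<t} = (Z \<inter> {t'<..<s (Suc j)}) \<union> (Z \<inter> {s (Suc j)}) \<union> (Z \<inter> {s (Suc j)<..<t})"
      using t t' by (intro split3) auto
    also have "Z \<inter> {t'<..<s (Suc j)} = {}" using jgap t' by auto
    also have "Z \<inter> {s (Suc j)<..<t} = {}"
      using sub_gap[of "Suc j" "s (Suc j)" t] gapI[OF iI] t R by auto
    also have "Z \<inter> {s (Suc j)} = {s (Suc j)}" using node_inZ[of j] assms by auto
    finally show "Z \<inter> {t'<..<t} = {s (Suc j)}" by simp
  qed
  moreover have "dp t' < 0" using XN t' by auto
  ultimately show "dp t > 0" by (simp add: mult_less_0_iff)
qed

lemma LEFT: "i < j \<Longrightarrow> up i \<and> dn i"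
proof -
  have "\<forall>d. d < j \<longrightarrow> up (j - 1 - d) \<and> dn (j - 1 - d)"
  proof
    fix d show "d < j \<longrightarrow> up (j - 1 - d) \<and> dn (j - 1 - d)"
    proof (induction d)
      case 0
      show ?case
      proof
        assume j0: "0 < j"
        have "j - 1 \<in> I" using j0 j_prop(1) by (auto simp: I_simp)
        then show "up (j - 1 - 0) \<and> dn (j - 1 - 0)" using G3[OF j0] G1b by auto
      qed
    next
      case (Suc d)
      show ?case
      proof
        assume dj: "Suc d < j"
        define i where "i = j - 1 - Suc d"
        have Si: "Suc i = j - 1 - d" using dj unfolding i_def by simp
        have iI: "i \<in> I" "Suc i \<in> I" using dj j_prop(1) Si unfolding i_def by (auto simp: I_simp)
        have "up (Suc i)" using Suc.IH dj Si by simp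
        then have "dn i" by (rule G2b[OF iI])
        then show "up (j - 1 - Suc d) \<and> dn (j - 1 - Suc d)" using G1b[OF iI(1)] unfolding i_def by auto
      qed
    qed
  qed
  moreover assume ij: "i < j"
  moreover have "j - 1 - i < j" using ij by simp
  ultimately have "up (j - 1 - (j - 1 - i)) \<and> dn (j - 1 - (j - 1 - i))" by blast
  moreover have "j - 1 - (j - 1 - i) = i" using ij by simp
  ultimately show "up i \<and> dn i" by simp
qed

lemma RIGHT: "i \<in> I \<Longrightarrow> j < i \<Longrightarrow> up i \<and> dn i"
proof -
  have "\<forall>d. Suc (Suc j + d) < K \<longrightarrow> up (Suc j + d) \<and> dn (Suc j + d)"
  proof
    fix d show "Suc (Suc j + d) < K \<longrightarrow> up (Suc j + d) \<and> dn (Suc j + d)"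
    proof (induction d)
      case 0
      show ?case
      proof
        assume "Suc (Suc j + 0) < K"
        then have a: "Suc (Suc j) < K" by simp
        have "Suc j \<in> I" using a by (auto simp: I_simp)
        then show "up (Suc j + 0) \<and> dn (Suc j + 0)" using G4[OF a] G1a by auto
      qed
    next
      case (Suc d)
      show ?case
      proof
        assume a: "Suc (Suc j + Suc d) < K"
        define i where "i = Suc j + d"
        have iI: "i \<in> I" "Suc i \<in> I" using a unfolding i_def by (auto simp: I_simp)
        have "dn i" using Suc.IH a unfolding i_def by simp
        then have "up (Suc i)" by (rule G2a[OF iI])
        then show "up (Suc j + Suc d) \<and> dn (Suc j + Suc d)" using G1a[OF iI(2)] unfolding i_def by auto
      qed
    qed
  qed
  moreover assume iI: "i \<in> I" "j < i"
  moreover have "Suc j + (i - Suc j) = i" using iI by simp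
  moreover have "Suc i < K" using iI by (simp add: I_simp)
  ultimately show "up i \<and> dn i" by (metis add_Suc)
qed

end


context cfg2 begin

lemma K2: "2 \<le> K" using jlt by simp

lemma s0_le: "i < K \<Longrightarrow> s 0 \<le> s i" using s_le_iff[of 0 i] by auto
lemma sL_ge: "i < K \<Longrightarrow> s i \<le> s (K - 1)" using s_le_iff[of i "K - 1"] K2 by auto

lemma incr: "a < b \<Longrightarrow> (\<And>\<xi>. a < \<xi> \<Longrightarrow> \<xi> < b \<Longrightarrow> dp \<xi> > 0) \<Longrightarrow> poly p a < poly p b"
proof -
  assume ab: "a < b" and d: "\<And>\<xi>. a < \<xi> \<Longrightarrow> \<xi> < b \<Longrightarrow> dp \<xi> > 0"
  obtain \<xi> where xi: "a < \<xi>" "\<xi> < b" "poly p b - poly p a = (b - a) * dp \<xi>" using poly_MVT[OF ab, of p] by blast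
  then have "(b - a) * dp \<xi> > 0" using d ab by simp
  then show ?thesis using xi(3) by simp
qed

lemma decr: "a < b \<Longrightarrow> (\<And>\<xi>. a < \<xi> \<Longrightarrow> \<xi> < b \<Longrightarrow> dp \<xi> < 0) \<Longrightarrow> poly p a > poly p b"
proof -
  assume ab: "a < b" and d: "\<And>\<xi>. a < \<xi> \<Longrightarrow> \<xi> < b \<Longrightarrow> dp \<xi> < 0"
  obtain \<xi> where xi: "a < \<xi>" "\<xi> < b" "poly p b - poly p a = (b - a) * dp \<xi>" using poly_MVT[OF ab, of p] by blast
  then have "(b - a) * dp \<xi> < 0" using d ab by (simp add: mult_pos_neg)
  then show ?thesis using xi(3) by simp
qed

lemma zero_in_I: "0 < j \<Longrightarrow> 0 \<in> I" using j_prop(1) by (auto simp: I_simp)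

lemma G5: assumes m1: "-1 \<notin> S" and t: "-1 \<le> t" "t < s 0" shows "dp t < 0"
proof -
  have tZ: "t \<notin> Z" using Z_range t by force
  show ?thesis
  proof (cases "j = 0")
    case True
    then have xs: "x = s 0" using j_prop by simp
    have "Z \<inter> {t<..<x} = {}" using Z_range xs by force
    then have "dp t * dp x > 0" using same[OF _ tZ x_notZ] t xs by simp
    then show ?thesis using XX by (simp add: zero_less_mult_iff)
  next
    case False
    then have I0: "0 \<in> I" using zero_in_I by simp
    note R = rp_prop[OF I0]
    have u: "up 0" using LEFT[of 0] False by simp
    define t' where "t' = (s 0 + r 0) / 2"
    have t': "s 0 < t'" "t' < r 0" using R unfolding t'_def by auto
    have s0: "-1 < s 0" "s 0 < 1"
    proof -
      have "s 0 \<in> S" using s_mem K2 by simp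
      then have "s 0 \<noteq> -1" using m1 by auto
      moreover have "-1 \<le> s 0" using s_range[of 0] K2 by auto
      ultimately show "-1 < s 0" by simp
      have "s 0 < s j" using s_mono[of 0 j] False j_prop by simp
      then show "s 0 < 1" using j_prop xr by simp
    qed
    have "dp t * dp t' < 0"
    proof (rule opp)
      show "t < t'" using t t' by simp
      show "t \<notin> Z" by (rule tZ)
      show "t' \<notin> Z" using notZ_I[OF I0, of t'] t' R by auto
      have "Z \<inter> {t<..<t'} = (Z \<inter> {t<..<s 0}) \<union> (Z \<inter> {s 0}) \<union> (Z \<inter> {s 0<..<t'})"
        using t t' by (intro split3) auto
      also have "Z \<inter> {t<..<s 0} = {}" using Z_range by force
      also have "Z \<inter> {s 0<..<t'} = {}" using sub_gap[of 0 "s 0" t'] gapI[OF I0] t' R by auto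
      also have "Z \<inter> {s 0} = {s 0}" using nodeZ[of 0] K2 False s0 by auto
      finally show "Z \<inter> {t<..<t'} = {s 0}" by simp
    qed
    moreover have "dp t' > 0" using u t' unfolding up_def by auto
    ultimately show ?thesis by (simp add: mult_less_0_iff)
  qed
qed

lemma G6: assumes p1: "1 \<notin> S" and t: "s (K - 1) < t" "t \<le> 1" shows "dp t > 0"
proof -
  define m where "m = K - 2"
  have L: "Suc m = K - 1" "Suc m < K" "j \<le> m" using K2 jlt unfolding m_def by auto
  have tZ: "t \<notin> Z" using Z_range t by force
  have sL: "-1 < s (Suc m)" "s (Suc m) < 1" "Suc m \<noteq> j"
  proof -
    have "s j < s (Suc m)" using s_mono[of j "Suc m"] L by simp
    then show "-1 < s (Suc m)" using j_prop xl by simp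
    have "s (Suc m) \<in> S" using s_mem L by simp
    then have "s (Suc m) \<noteq> 1" using p1 by auto
    moreover have "s (Suc m) \<le> 1" using s_range[of "Suc m"] L by auto
    ultimately show "s (Suc m) < 1" by simp
    show "Suc m \<noteq> j" using L by simp
  qed
  have nodeL: "Z \<inter> {s (Suc m)} = {s (Suc m)}" using nodeZ[of "Suc m"] L sL by auto
  have right: "Z \<inter> {s (Suc m)<..<t} = {}" using Z_range L by force
  show ?thesis
  proof (cases "m = j")
    case True
    define t' where "t' = (x + s (Suc j)) / 2"
    have t': "x < t'" "t' < s (Suc j)" using x_lt unfolding t'_def by auto
    have "dp t' * dp t < 0"
    proof (rule opp)
      show "t' < t" using t t' L True by simp
      show "t' \<notin> Z" using jgap t' by auto
      show "t \<notin> Z" by (rule tZ)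
      have "Z \<inter> {t'<..<t} = (Z \<inter> {t'<..<s (Suc m)}) \<union> (Z \<inter> {s (Suc m)}) \<union> (Z \<inter> {s (Suc m)<..<t})"
        using t t' True L by (intro split3) auto
      also have "Z \<inter> {t'<..<s (Suc m)} = {}" using jgap t' True by auto
      finally show "Z \<inter> {t'<..<t} = {s (Suc m)}" using nodeL right by simp
    qed
    moreover have "dp t' < 0" using XN t' by auto
    ultimately show ?thesis by (simp add: mult_less_0_iff)
  next
    case False
    then have mI: "m \<in> I" "j < m" using L by (auto simp: I_simp)
    note R = rp_prop[OF mI(1)]
    have d: "dn m" using RIGHT[OF mI] by simp
    define t' where "t' = (r m + s (Suc m)) / 2"
    have t': "r m < t'" "t' < s (Suc m)" using R unfolding t'_def by auto
    have "dp t' * dp t < 0"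
    proof (rule opp)
      show "t' < t" using t t' L by simp
      show "t' \<notin> Z" using notZ_I[OF mI(1), of t'] t' R by auto
      show "t \<notin> Z" by (rule tZ)
      have "Z \<inter> {t'<..<t} = (Z \<inter> {t'<..<s (Suc m)}) \<union> (Z \<inter> {s (Suc m)}) \<union> (Z \<inter> {s (Suc m)<..<t})"
        using t t' L by (intro split3) auto
      also have "Z \<inter> {t'<..<s (Suc m)} = {}" using sub_gap[of m t' "s (Suc m)"] gapI[OF mI(1)] t' R by auto
      finally show "Z \<inter> {t'<..<t} = {s (Suc m)}" using nodeL right by simp
    qed
    moreover have "dp t' < 0" using d t' unfolding dn_def by auto
    ultimately show ?thesis by (simp add: mult_less_0_iff)
  qed
qed

lemma s0_m1: assumes "-1 \<in> S" shows "s 0 = -1"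
proof -
  obtain k where "k < K" "s k = -1" using s_surj assms by blast
  then show ?thesis using s0_le[of k] s_range[of 0] K2 by force
qed

lemma sL_1: assumes "1 \<in> S" shows "s (K - 1) = 1"
proof -
  obtain k where "k < K" "s k = 1" using s_surj assms by blast
  then show ?thesis using sL_ge[of k] s_range[of "K - 1"] K2 by force
qed

lemma G7: assumes "-1 \<in> S" shows "dp (-1) > 0"
proof -
  have s0: "s 0 = -1" by (rule s0_m1[OF assms])
  have j0: "0 < j" using j_prop s0 xl by (cases j) auto
  have I0: "0 \<in> I" using zero_in_I[OF j0] .
  note R = rp_prop[OF I0]
  have u: "up 0" using LEFT[of 0] j0 by simp
  define t' where "t' = (s 0 + r 0) / 2"
  have t': "s 0 < t'" "t' < r 0" using R unfolding t'_def by auto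
  have "-1 \<notin> Z" using nodeZ[of 0] K2 s0 by auto
  moreover have "t' \<notin> Z" using notZ_I[OF I0, of t'] t' R by auto
  moreover have "Z \<inter> {-1<..<t'} = {}" using sub_gap[of 0 "-1" t'] gapI[OF I0] t' R s0 by auto
  ultimately have "dp (-1) * dp t' > 0" using same[of "-1" t'] t' s0 by simp
  moreover have "dp t' > 0" using u t' unfolding up_def by auto
  ultimately show ?thesis by (simp add: zero_less_mult_iff)
qed

lemma G8: assumes "1 \<in> S" shows "dp 1 < 0"
proof -
  define m where "m = K - 2"
  have L: "Suc m = K - 1" "Suc m < K" "j \<le> m" using K2 jlt unfolding m_def by auto
  have sL: "s (Suc m) = 1" using sL_1[OF assms] L by simp
  show ?thesis
  proof (cases "m = j")
    case True then show ?thesis using XN1 sL by simp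
  next
    case False
    then have mI: "m \<in> I" "j < m" using L by (auto simp: I_simp)
    note R = rp_prop[OF mI(1)]
    have d: "dn m" using RIGHT[OF mI] by simp
    define t' where "t' = (r m + 1) / 2"
    have t': "r m < t'" "t' < 1" using R sL unfolding t'_def by auto
    have "1 \<notin> Z" using nodeZ[of "Suc m"] L sL by auto
    moreover have "t' \<notin> Z" using notZ_I[OF mI(1), of t'] t' R sL by auto
    moreover have "Z \<inter> {t'<..<1} = {}" using sub_gap[of m t' 1] gapI[OF mI(1)] t' R sL by auto
    ultimately have "dp t' * dp 1 > 0" using same[of t' 1] t' by simp
    moreover have "dp t' < 0" using d t' sL unfolding dn_def by auto
    ultimately show ?thesis by (simp add: zero_less_mult_iff)
  qed
qed

lemma find_gap: assumes "s 0 \<le> t" "t \<le> s (K - 1)" shows "\<exists>i. Suc i < K \<and> s i \<le> t \<and> t \<le> s (Suc i)"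
proof -
  have "\<forall>l. l < K \<longrightarrow> t \<le> s l \<longrightarrow> t = s 0 \<or> (\<exists>i. Suc i \<le> l \<and> s i \<le> t \<and> t \<le> s (Suc i))"
  proof
    fix l show "l < K \<longrightarrow> t \<le> s l \<longrightarrow> t = s 0 \<or> (\<exists>i. Suc i \<le> l \<and> s i \<le> t \<and> t \<le> s (Suc i))"
    proof (induction l)
      case 0 then show ?case using assms by auto
    next
      case (Suc l)
      show ?case
      proof (intro impI)
        assume a: "Suc l < K" "t \<le> s (Suc l)"
        show "t = s 0 \<or> (\<exists>i. Suc i \<le> Suc l \<and> s i \<le> t \<and> t \<le> s (Suc i))"
        proof (cases "t \<le> s l")
          case True then show ?thesis using Suc.IH a by (auto intro: le_SucI)
        next
          case False then show ?thesis using a by auto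
        qed
      qed
    qed
  qed
  then have "t = s 0 \<or> (\<exists>i. Suc i \<le> K - 1 \<and> s i \<le> t \<and> t \<le> s (Suc i))" using assms K2 by auto
  then show ?thesis
  proof
    assume "t = s 0"
    moreover have "s 0 \<le> s (Suc 0)" using s_le_iff[of 0 1] K2 by auto
    ultimately show ?thesis using K2 by (intro exI[of _ 0]) auto
  next
    assume "\<exists>i. Suc i \<le> K - 1 \<and> s i \<le> t \<and> t \<le> s (Suc i)"
    then obtain i where "Suc i \<le> K - 1" "s i \<le> t" "t \<le> s (Suc i)" by blast
    then show ?thesis using K2 by (intro exI[of _ i]) auto
  qed
qed

lemma MAIN: assumes t: "-1 \<le> t" "t \<le> 1" shows "vfun x t \<le> poly p t"
proof -
  have K0: "0 < K" using K2 by simp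
  consider "t < s 0" | "s (K - 1) < t" | "s 0 \<le> t \<and> t \<le> s (K - 1)" by linarith
  then show ?thesis
  proof cases
    case 1
    have m1: "-1 \<notin> S" using s0_m1 1 t by force
    have "poly p t > poly p (s 0)"
      by (rule decr) (use 1 G5[OF m1] t in auto)
    moreover have "poly p (s 0) = 1" using v_s[OF K0] by simp
    moreover have "s 0 \<le> x" using s0_le[OF j_prop(1)] j_prop by simp
    ultimately show ?thesis using 1 unfolding vfun_def by auto
  next
    case 2
    have p1: "1 \<notin> S" using sL_1 2 t by force
    have "poly p (s (K - 1)) < poly p t"
    proof (rule incr)
      show "s (K - 1) < t" using 2 .
      fix \<xi> assume "s (K - 1) < \<xi>" "\<xi> < t"
      then show "dp \<xi> > 0" using G6[OF p1, of \<xi>] t by simp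
    qed
    moreover have "poly p (s (K - 1)) = 0" using v_s[of "K - 1"] jlt by auto
    moreover have "x \<le> s (K - 1)" using sL_ge[OF j_prop(1)] j_prop by simp
    ultimately show ?thesis using 2 unfolding vfun_def by auto
  next
    case 3
    then obtain i where i: "Suc i < K" "s i \<le> t" "t \<le> s (Suc i)" using find_gap by blast
    show ?thesis
    proof (cases "i = j")
      case True
      show ?thesis
      proof (cases "t = x")
        case True then show ?thesis using v_s[OF j_prop(1)] j_prop unfolding vfun_def by simp
      next
        case False
        then have tx: "x < t" using i True j_prop by simp
        have "0 \<le> poly p t"
        proof (cases "t = s (Suc j)")
          case True then show ?thesis using v_s[OF jlt] by simp
        next
          case False
          then have "t < s (Suc j)" using i \<open>i = j\<close> by simp
          then have "poly p t > poly p (s (Suc j))"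
            by (rule decr) (use XN tx in auto)
          then show ?thesis using v_s[OF jlt] by simp
        qed
        then show ?thesis using tx unfolding vfun_def by simp
      qed
    next
      case False
      then have iI: "i \<in> I" using i by (simp add: I_simp)
      note R = rp_prop[OF iI]
      have ud: "up i \<and> dn i" using LEFT[of i] RIGHT[OF iI] False by (cases "i < j") auto
      have vals_eq: "poly p (s i) = vfun x t \<and> poly p (s (Suc i)) = vfun x t"
      proof (cases "i < j")
        case True
        then have "s (Suc i) \<le> x" using s_le_iff[of "Suc i" j] j_prop i by auto
        then show ?thesis using v_s[of i] v_s[of "Suc i"] i True unfolding vfun_def by auto
      next
        case False
        then have "j < i" using \<open>i \<noteq> j\<close> by simp
        then have "x < s i" using s_less_iff[of j i] j_prop i by auto
        then show ?thesis using v_s[of i] v_s[of "Suc i"] i \<open>j < i\<close> unfolding vfun_def by auto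
      qed
      show ?thesis
      proof (cases "t \<le> r i")
        case True
        show ?thesis
        proof (cases "t = s i")
          case True then show ?thesis using vals_eq by simp
        next
          case False
          then have "s i < t" using i by simp
          then have "poly p (s i) < poly p t"
            by (rule incr) (use ud True in \<open>auto simp: up_def\<close>)
          then show ?thesis using vals_eq by simp
        qed
      next
        case False
        show ?thesis
        proof (cases "t = s (Suc i)")
          case True then show ?thesis using vals_eq by simp
        next
          case False
          then have "t < s (Suc i)" using i by simp
          then have "poly p t > poly p (s (Suc i))"
            by (rule decr) (use ud \<open>\<not> t \<le> r i\<close> in \<open>auto simp: dn_def\<close>)
          then show ?thesis using vals_eq by simp
        qed
      qed
    qed
  qed
qed

end

context cfg begin

lemma cfg_result:
  "(\<forall>t\<in>{-1..1}. vfun x t \<le> poly p t) \<and>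
   (-1 \<in> S \<longrightarrow> 0 \<le> poly (pderiv p) (-1)) \<and> (-1 \<notin> S \<longrightarrow> poly (pderiv p) (-1) \<le> 0) \<and>
   (1 \<in> S \<longrightarrow> poly (pderiv p) 1 \<le> 0) \<and> (1 \<notin> S \<longrightarrow> 0 \<le> poly (pderiv p) 1)"
proof (cases "Suc j = K")
  case True
  then have "p = 1" by (rule p_one)
  then show ?thesis unfolding vfun_def by auto
next
  case False
  then have "Suc j < K" using j_prop(1) by simp
  then interpret c2: cfg2 S x p by unfold_locales
  have a: "\<forall>t\<in>{-1..1}. vfun x t \<le> poly p t" using c2.MAIN by auto
  have b: "-1 \<notin> S \<longrightarrow> poly (pderiv p) (-1) \<le> 0"
  proof
    assume m: "-1 \<notin> S"
    have "s 0 \<in> S" using s_mem c2.K2 by simp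
    then have "s 0 \<noteq> -1" using m by auto
    moreover have "-1 \<le> s 0" using s_range[of 0] c2.K2 by auto
    ultimately have "-1 < s 0" by simp
    then show "poly (pderiv p) (-1) \<le> 0" using c2.G5[OF m] by force
  qed
  have c: "1 \<notin> S \<longrightarrow> 0 \<le> poly (pderiv p) 1"
  proof
    assume m: "1 \<notin> S"
    have "s (K - 1) \<in> S" using s_mem c2.K2 by simp
    then have "s (K - 1) \<noteq> 1" using m by auto
    moreover have "s (K - 1) \<le> 1" using s_range[of "K - 1"] c2.K2 by auto
    ultimately have "s (K - 1) < 1" by simp
    then show "0 \<le> poly (pderiv p) 1" using c2.G6[OF m] by force
  qed
  show ?thesis using a b c c2.G7 c2.G8 by force
qed

end


lemma sum_Imult:
  assumes "finite S" "S \<subseteq> {-1..1}"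
  shows "(\<Sum>u\<in>S. Imult u) = int (card S) + int (card (S \<inter> {-1<..<1}))"
proof -
  have "(\<Sum>u\<in>S. Imult u) = (\<Sum>u\<in>S. 1 + (if u \<in> {-1<..<1} then 1 else 0))"
    using assms(2) by (intro sum.cong) (auto simp: Imult_def)
  also have "\<dots> = (\<Sum>u\<in>S. 1) + (\<Sum>u\<in>S. if u \<in> {-1<..<1} then 1 else 0)"
    by (rule sum.distrib)
  also have "(\<Sum>u\<in>S. if u \<in> {-1<..<1} then 1 else (0::int)) = (\<Sum>u\<in>S \<inter> {-1<..<1}. 1)"
    using sum.inter_restrict[OF assms(1), of "\<lambda>_. (1::int)" "{-1<..<1}"] by simp
  finally show ?thesis by simp
qed

lemma herm_the:
  assumes A: "finite A" and D: "D \<subseteq> A" and N: "1 \<le> card A + card D"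
    and Q: "\<And>p. Q p \<longleftrightarrow> degree p < card A + card D \<and> herm A D f p"
  shows "degree (THE p. Q p) < card A + card D \<and> herm A D f (THE p. Q p)"
proof -
  obtain p0 where p0: "p0 = 0 \<or> degree p0 < card A + card D" "herm A D f p0" using herm_exists[OF A D] by blast
  have Qp0: "Q p0" using p0 N Q by auto
  have "Q (THE p. Q p)"
  proof (rule theI[of Q p0])
    show "Q p0" by (rule Qp0)
    fix p assume "Q p"
    then show "p = p0" using herm_unique[OF A D, of p f p0] p0 Q by auto
  qed
  then show ?thesis using Q by blast
qed

lemma card_D: "finite S \<Longrightarrow> x \<in> S \<Longrightarrow> -1 < x \<Longrightarrow> x < 1 \<Longrightarrow> card (Dset S x) + 1 = card (S \<inter> {-1<..<1})"
proof -
  assume a: "finite S" "x \<in> S" "-1 < x" "x < 1"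
  have "Dset S x = (S \<inter> {-1<..<1}) - {x}" unfolding Dset_def by auto
  moreover have "x \<in> S \<inter> {-1<..<1}" using a by auto
  moreover have "finite (S \<inter> {-1<..<1})" using a by auto
  moreover have "card (S \<inter> {-1<..<1}) > 0" using calculation(2,3) card_gt_0_iff by blast
  ultimately show ?thesis by (simp add: card_Diff_singleton)
qed

lemma up_cfg:
  assumes S: "finite S" "S \<subseteq> {-1..1}" "x \<in> S" "-1 < x" "x < 1"
  defines "P \<equiv> (THE p. int (degree p) \<le> (\<Sum>u\<in>S. Imult u) - 2 \<and>
      (\<forall>u \<in> S \<inter> {-1..x}. poly p u = 1) \<and>
      (\<forall>u \<in> S \<inter> {x<..1}. poly p u = 0) \<and>
      (\<forall>u \<in> (S - {x}) \<inter> {-1<..<1}. poly (pderiv p) u = 0))"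
  shows "cfg S x P"
proof -
  let ?D = "Dset S x"
  have cD: "card ?D + 1 = card (S \<inter> {-1<..<1})" by (rule card_D) (use S in auto)
  have sI: "(\<Sum>u\<in>S. Imult u) = int (card S) + int (card (S \<inter> {-1<..<1}))" by (rule sum_Imult) (use S in auto)
  have Dsub: "?D \<subseteq> S" unfolding Dset_def by auto
  have "card S > 0" using S(1,3) card_gt_0_iff by blast
  then have N: "1 \<le> card S + card ?D" by simp
  have Q: "(int (degree p) \<le> (\<Sum>u\<in>S. Imult u) - 2 \<and>
      (\<forall>u \<in> S \<inter> {-1..x}. poly p u = 1) \<and>
      (\<forall>u \<in> S \<inter> {x<..1}. poly p u = 0) \<and>
      (\<forall>u \<in> (S - {x}) \<inter> {-1<..<1}. poly (pderiv p) u = 0)) \<longleftrightarrow>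
      degree p < card S + card ?D \<and> herm S ?D (vfun x) p" for p
  proof -
    have "int (degree p) \<le> (\<Sum>u\<in>S. Imult u) - 2 \<longleftrightarrow> degree p < card S + card ?D"
      unfolding sI using cD by linarith
    moreover have "((\<forall>u \<in> S \<inter> {-1..x}. poly p u = 1) \<and> (\<forall>u \<in> S \<inter> {x<..1}. poly p u = 0))
        \<longleftrightarrow> (\<forall>u\<in>S. poly p u = vfun x u)"
    proof -
      have Sb: "\<And>u. u \<in> S \<Longrightarrow> -1 \<le> u \<and> u \<le> 1" using S(2) by auto
      show ?thesis
      proof
        assume a: "(\<forall>u \<in> S \<inter> {-1..x}. poly p u = 1) \<and> (\<forall>u \<in> S \<inter> {x<..1}. poly p u = 0)"
        show "\<forall>u\<in>S. poly p u = vfun x u"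
        proof
          fix u assume u: "u \<in> S"
          show "poly p u = vfun x u"
          proof (cases "u \<le> x")
            case True then show ?thesis using a u Sb[OF u] unfolding vfun_def by auto
          next
            case False then show ?thesis using a u Sb[OF u] unfolding vfun_def by auto
          qed
        qed
      next
        assume a: "\<forall>u\<in>S. poly p u = vfun x u"
        then show "(\<forall>u \<in> S \<inter> {-1..x}. poly p u = 1) \<and> (\<forall>u \<in> S \<inter> {x<..1}. poly p u = 0)"
          unfolding vfun_def by auto
      qed
    qed
    ultimately show ?thesis unfolding herm_def Dset_def by auto
  qed
  have "degree P < card S + card ?D \<and> herm S ?D (vfun x) P"
    unfolding P_def by (rule herm_the[OF S(1) Dsub N]) (rule Q)
  then have h: "degree P < card S + card ?D" "\<forall>u\<in>S. poly P u = vfun x u"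
    "\<forall>u\<in>?D. poly (pderiv P) u = 0" unfolding herm_def by auto
  show ?thesis
  proof (unfold_locales)
    show "finite S" "S \<subseteq> {-1..1}" "x \<in> S" "-1 < x" "x < 1" using S by auto
    show "\<forall>u\<in>S. poly P u = vfun x u" using h by blast
    show "\<forall>u\<in>?D. poly (pderiv P) u = 0" using h by blast
    show "P = 0 \<or> degree P < card S + card ?D" using h by blast
  qed
qed

lemma low_char:
  assumes S: "finite S" "S \<subseteq> {-1..1}" "x \<in> S" "-1 < x" "x < 1"
  defines "P \<equiv> (THE p. int (degree p) \<le> (\<Sum>u\<in>S. Imult u) - 2 \<and>
      (\<forall>u \<in> S \<inter> {-1..<x}. poly p u = 1) \<and>
      (\<forall>u \<in> S \<inter> {x..1}. poly p u = 0) \<and>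
      (\<forall>u \<in> (S - {x}) \<inter> {-1<..<1}. poly (pderiv p) u = 0))"
  shows "degree P < card S + card (Dset S x) \<and> herm S (Dset S x) (\<lambda>u. if u < x then 1 else 0) P"
proof -
  let ?D = "Dset S x"
  have cD: "card ?D + 1 = card (S \<inter> {-1<..<1})" by (rule card_D) (use S in auto)
  have sI: "(\<Sum>u\<in>S. Imult u) = int (card S) + int (card (S \<inter> {-1<..<1}))" by (rule sum_Imult) (use S in auto)
  have Dsub: "?D \<subseteq> S" unfolding Dset_def by auto
  have "card S > 0" using S(1,3) card_gt_0_iff by blast
  then have N: "1 \<le> card S + card ?D" by simp
  have Q: "(int (degree p) \<le> (\<Sum>u\<in>S. Imult u) - 2 \<and>
      (\<forall>u \<in> S \<inter> {-1..<x}. poly p u = 1) \<and>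
      (\<forall>u \<in> S \<inter> {x..1}. poly p u = 0) \<and>
      (\<forall>u \<in> (S - {x}) \<inter> {-1<..<1}. poly (pderiv p) u = 0)) \<longleftrightarrow>
      degree p < card S + card ?D \<and> herm S ?D (\<lambda>u. if u < x then 1 else 0) p" for p
  proof -
    have "int (degree p) \<le> (\<Sum>u\<in>S. Imult u) - 2 \<longleftrightarrow> degree p < card S + card ?D"
      unfolding sI using cD by linarith
    moreover have "((\<forall>u \<in> S \<inter> {-1..<x}. poly p u = 1) \<and> (\<forall>u \<in> S \<inter> {x..1}. poly p u = 0))
        \<longleftrightarrow> (\<forall>u\<in>S. poly p u = (if u < x then 1 else 0))"
    proof -
      have Sb: "\<And>u. u \<in> S \<Longrightarrow> -1 \<le> u \<and> u \<le> 1" using S(2) by auto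
      show ?thesis
      proof
        assume a: "(\<forall>u \<in> S \<inter> {-1..<x}. poly p u = 1) \<and> (\<forall>u \<in> S \<inter> {x..1}. poly p u = 0)"
        show "\<forall>u\<in>S. poly p u = (if u < x then 1 else 0)"
        proof
          fix u assume u: "u \<in> S"
          show "poly p u = (if u < x then 1 else 0)"
          proof (cases "u < x")
            case True then show ?thesis using a u Sb[OF u] by auto
          next
            case False then show ?thesis using a u Sb[OF u] by auto
          qed
        qed
      next
        assume a: "\<forall>u\<in>S. poly p u = (if u < x then 1 else 0)"
        then show "(\<forall>u \<in> S \<inter> {-1..<x}. poly p u = 1) \<and> (\<forall>u \<in> S \<inter> {x..1}. poly p u = 0)"
          by auto
      qed
    qed
    ultimately show ?thesis unfolding herm_def Dset_def by auto
  qed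
  show ?thesis
    unfolding P_def by (rule herm_the[OF S(1) Dsub N]) (rule Q)
qed

lemma low_cfg:
  assumes S: "finite S" "S \<subseteq> {-1..1}" "x \<in> S" "-1 < x" "x < 1"
    and P: "degree P < card S + card (Dset S x)" "herm S (Dset S x) (\<lambda>u. if u < x then 1 else 0) P"
  shows "cfg (uminus ` S) (-x) (1 - pcompose P [:0,-1:])"
proof -
  let ?Q = "1 - pcompose P [:0,-1:]"
  have pQ: "poly ?Q t = 1 - poly P (-t)" for t by (simp add: poly_pcompose)
  have dQ: "poly (pderiv ?Q) t = poly (pderiv P) (-t)" for t
    by (simp add: pderiv_diff pderiv_pcompose poly_pcompose pderiv_pCons)
  have DS: "Dset (uminus ` S) (-x) = uminus ` Dset S x" unfolding Dset_def by auto
  have cS: "card (uminus ` S) = card S" by (rule card_image) (simp add: inj_on_def)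
  have cDS: "card (Dset (uminus ` S) (-x)) = card (Dset S x)" unfolding DS by (rule card_image) (simp add: inj_on_def)
  have dg: "degree (pcompose P [:0,-1:]) = degree P" by (simp add: degree_pcompose)
  have "degree ?Q \<le> max (degree (1::real poly)) (degree (pcompose P [:0,-1:]))" by (rule degree_diff_le_max)
  then have dQ2: "degree ?Q \<le> degree P" using dg by simp
  show ?thesis
  proof (unfold_locales)
    show "finite (uminus ` S)" using S by simp
    show "uminus ` S \<subseteq> {-1..1}" using S(2) by auto
    show "-x \<in> uminus ` S" using S by simp
    show "-1 < -x" "-x < 1" using S by auto
    show "\<forall>u\<in>uminus ` S. poly ?Q u = vfun (-x) u"
      using P(2) unfolding herm_def vfun_def pQ by auto
    show "\<forall>u\<in>Dset (uminus ` S) (-x). poly (pderiv ?Q) u = 0"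
      using P(2) unfolding herm_def DS dQ by auto
    show "?Q = 0 \<or> degree ?Q < card (uminus ` S) + card (Dset (uminus ` S) (-x))"
      using dQ2 P(1) cS cDS by auto
  qed
qed



theorem lemma6p5:
  fixes w :: "real \<Rightarrow> real" and n :: nat and x :: real
  assumes w_nonneg: "\<And>t. t \<in> {-1..1} \<Longrightarrow> w t \<ge> 0"
    and w_int: "w integrable_on {-1..1}"
    and w_nonzero: "integral {-1..1} w \<noteq> 0"
    and n: "n \<ge> 1"
    and x: "-1 < x" "x < 1"
  shows "(\<forall>t \<in> {-1..1}.
            poly (p_low w n x) t \<le> indicator {-1..<x} t \<and>
            indicator {-1..<x} t \<le> (indicator {-1..x} t :: real) \<and>
            indicator {-1..x} t \<le> poly (p_up w n x) t)
      \<and> (-1 \<in> Sx w n x \<longrightarrow>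
            poly (pderiv (p_low w n x)) (-1) \<le> 0 \<and> 0 \<le> poly (pderiv (p_up w n x)) (-1))
      \<and> (-1 \<notin> Sx w n x \<longrightarrow>
            poly (pderiv (p_up w n x)) (-1) \<le> 0 \<and> 0 \<le> poly (pderiv (p_low w n x)) (-1))
      \<and> (1 \<in> Sx w n x \<longrightarrow>
            poly (pderiv (p_up w n x)) 1 \<le> 0 \<and> 0 \<le> poly (pderiv (p_low w n x)) 1)
      \<and> (1 \<notin> Sx w n x \<longrightarrow>
            poly (pderiv (p_low w n x)) 1 \<le> 0 \<and> 0 \<le> poly (pderiv (p_up w n x)) 1)"
proof -
  have gw: "good_weight w" unfolding good_weight_def using w_nonneg w_int w_nonzero by auto
  interpret ws: wsetup w n using gw n by unfold_locales
  define S where "S = Sx w n x"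
  have S: "finite S" "S \<subseteq> {-1..1}" "x \<in> S" using ws.Sx_props[OF x] unfolding S_def by auto
  define PU where "PU = p_up w n x"
  define PL where "PL = p_low w n x"
  have cu: "cfg S x PU" unfolding PU_def p_up_def S_def[symmetric] by (rule up_cfg) (use S x in auto)
  have lc: "degree PL < card S + card (Dset S x) \<and> herm S (Dset S x) (\<lambda>u. if u < x then 1 else 0) PL"
    unfolding PL_def p_low_def S_def[symmetric] by (rule low_char) (use S x in auto)
  have cl: "cfg (uminus ` S) (-x) (1 - pcompose PL [:0,-1:])"
    by (rule low_cfg) (use S x lc in auto)
  note RU = cfg.cfg_result[OF cu]
  note RL = cfg.cfg_result[OF cl]
  have pQ: "poly (1 - pcompose PL [:0,-1:]) t = 1 - poly PL (-t)" for t by (simp add: poly_pcompose)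
  have dQ: "poly (pderiv (1 - pcompose PL [:0,-1:])) t = poly (pderiv PL) (-t)" for t
    by (simp add: pderiv_diff pderiv_pcompose poly_pcompose pderiv_pCons)
  have m1: "-1 \<in> uminus ` S \<longleftrightarrow> 1 \<in> S" by force
  have p1: "1 \<in> uminus ` S \<longleftrightarrow> -1 \<in> S" by force
  have part1: "\<forall>t \<in> {-1..1}.
            poly PL t \<le> indicator {-1..<x} t \<and>
            indicator {-1..<x} t \<le> (indicator {-1..x} t :: real) \<and>
            indicator {-1..x} t \<le> poly PU t"
  proof
    fix t :: real assume t: "t \<in> {-1..1}"
    have a: "vfun x t \<le> poly PU t" using RU t by blast
    have "-t \<in> {-1..1}" using t by auto
    then have "vfun (-x) (-t) \<le> poly (1 - pcompose PL [:0,-1:]) (-t)" using RL by blast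
    then have b: "vfun (-x) (-t) \<le> 1 - poly PL t" unfolding pQ by simp
    have i1: "indicator {-1..<x} t = (if t < x then 1 else 0 :: real)" using t by (simp add: indicator_def)
    have i2: "indicator {-1..x} t = (if t \<le> x then 1 else 0 :: real)" using t by (simp add: indicator_def)
    show "poly PL t \<le> indicator {-1..<x} t \<and>
            indicator {-1..<x} t \<le> (indicator {-1..x} t :: real) \<and>
            indicator {-1..x} t \<le> poly PU t"
    proof (cases "t < x")
      case True
      then show ?thesis using a b unfolding i1 i2 vfun_def by simp
    next
      case False
      then show ?thesis using a b unfolding i1 i2 vfun_def by (cases "t = x") simp_all
    qed
  qed
  have dm1: "poly (pderiv PL) 1 = poly (pderiv (1 - pcompose PL [:0,-1:])) (-1)" using dQ[of "-1"] by simp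
  have dp1: "poly (pderiv PL) (-1) = poly (pderiv (1 - pcompose PL [:0,-1:])) 1" using dQ[of 1] by simp
  have c1: "-1 \<in> S \<longrightarrow> poly (pderiv PL) (-1) \<le> 0 \<and> 0 \<le> poly (pderiv PU) (-1)"
    using RU RL p1 dp1 by simp
  have c2: "-1 \<notin> S \<longrightarrow> poly (pderiv PU) (-1) \<le> 0 \<and> 0 \<le> poly (pderiv PL) (-1)"
    using RU RL p1 dp1 by simp
  have c3: "1 \<in> S \<longrightarrow> poly (pderiv PU) 1 \<le> 0 \<and> 0 \<le> poly (pderiv PL) 1"
    using RU RL m1 dm1 by simp
  have c4: "1 \<notin> S \<longrightarrow> poly (pderiv PL) 1 \<le> 0 \<and> 0 \<le> poly (pderiv PU) 1"
    using RU RL m1 dm1 by simp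
  show ?thesis
    unfolding S_def[symmetric] PU_def[symmetric] PL_def[symmetric]
    using part1 c1 c2 c3 c4 by blast
qed



end
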